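(* Let $X$ be a connected, finite, simple $4$-valent graph equipped with an orientation at each vertex, let $k\geq1$, let $N=|V(\mathrm{GC}_{k,0}(X))|$ and let $\lambda_1(\mathrm{GC}_{k,0}(X))\leq\cdots\leq\lambda_N(\mathrm{GC}_{k,0}(X))$ be its Laplacian eigenvalues. Let $\nu_1(k)\leq\cdots\leq\nu_{k^2}(k)$ be the eigenvalues of the adjacency matrix, and $0=\lambda_1(k)\leq\cdots\leq\lambda_{k^2}(k)$ the eigenvalues of the Laplacian, of the $4$-valent $(k,0)$-cluster $\square(k)$. Then for $j=1,\dots,k^2$, $$\lambda_j(\mathrm{GC}_{k,0}(X))\leq 4-\nu_{k^2-j+1}(k),\qquad \lambda_{N-j+1}(\mathrm{GC}_{k,0}(X))\geq 4-\nu_j(k).$$ Moreover, $$\lambda_i(\mathrm{GC}_{k,0}(X))\leq\lambda_t(k)+\delta_{k^2-t+i}(k)\quad\text{for }1\leq i\leq t\leq k^2,$$ $$\lambda_{N-j+1}(\mathrm{GC}_{k,0}(X))\geq\lambda_{k^2-s+1}(k)+\delta_{1+s-j}(k)\quad\text{for }1\leq j\leq s\leq k^2,$$ where $\delta_j(k)=0$ for $j=1,\dots,k^2-4k+4$, $\delta_j(k)=1$ for $j=k^2-4k+5,\dots,k^2-4$, and $\delta_j(k)=2$ for $j=k^2-3,k^2-2,k^2-1,k^2$.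
   Context: The Laplacian of a graph $Y$ acts on $f\in\mathbb{C}^{V(Y)}$ by $(\Delta_Y f)(p)=\deg_Y(p)f(p)-\sum_{q\sim p}f(q)$; eigenvalues are listed with multiplicity in nondecreasing order. An orientation at each vertex is a cyclic ordering of the four edges at each vertex. The $4$-valent $(k,0)$-cluster $\square(k)$: the square with vertices $0,k,(1+i)k,ik$ is subdivided by the square lattice $\mathbb{Z}[i]$ into $k^2$ unit squares; $\square(k)$ is the graph whose vertices are their barycenters, adjacent when the squares share an edge (i.e. the $k\times k$ grid graph; its Laplacian uses its own vertex degrees). Goldberg–Coxeter construction $\mathrm{GC}_{k,0}(X)$: for each $p\in V(X)$ take a copy $\square(p)$ of $\square(k)$ on the square $S$ with vertices $0,k,(1+i)k,ik$, whose four sides are matched with the four edges at $p$ so that the cyclic order at $p$ agrees with the counterclockwise order of the sides. For each edge $e=pq$, place $\square(p)$ on $S$ with $e$ corresponding to the side from $k$ to $(1+i)k$ and $\square(q)$ (preserving orientation) on the adjacent square with vertices $k,2k,(2+i)k,(1+i)k$ with $e$ corresponding to the side from $(1+i)k$ to $k$, and join (identify) the overlapping lattice edges; the result is the $4$-valent graph $\mathrm{GC}_{k,0}(X)$, containing each $\square(p)$ as an induced subgraph. *)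

theory Defs
  imports "HOL-Combinatorics.Permutations" "HOL-Computational_Algebra.Polynomial"
begin

definition adj_matrix :: "'a set \<Rightarrow> ('a \<Rightarrow> 'a \<Rightarrow> bool) \<Rightarrow> 'a \<Rightarrow> 'a \<Rightarrow> real" where
  "adj_matrix S adj u v = (if adj u v then 1 else 0)"

definition lap_matrix :: "'a set \<Rightarrow> ('a \<Rightarrow> 'a \<Rightarrow> bool) \<Rightarrow> 'a \<Rightarrow> 'a \<Rightarrow> real" where
  "lap_matrix S adj u v =
     (if u = v then real (card {w \<in> S. adj u w}) else 0) - (if adj u v then 1 else 0)"

text \<open>Characteristic polynomial det(x I - M) of a matrix indexed by a finite set S (Leibniz formula).\<close>
definition charpoly :: "'a set \<Rightarrow> ('a \<Rightarrow> 'a \<Rightarrow> real) \<Rightarrow> real poly" where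
  "charpoly S M = (\<Sum>\<sigma> \<in> {\<sigma>. \<sigma> permutes S}.
      of_int (sign \<sigma>) * (\<Prod>v\<in>S. [: - M v (\<sigma> v), (if \<sigma> v = v then 1 else 0) :]))"

text \<open>Eigenvalues listed with multiplicity in nondecreasing order (0-based list).\<close>
definition eigenvalues :: "'a set \<Rightarrow> ('a \<Rightarrow> 'a \<Rightarrow> real) \<Rightarrow> real list" where
  "eigenvalues S M = (THE xs. sorted xs \<and> charpoly S M = (\<Prod>x\<leftarrow>xs. [: - x, 1 :]))"

definition simple_graph :: "'v set \<Rightarrow> ('v \<Rightarrow> 'v \<Rightarrow> bool) \<Rightarrow> bool" where
  "simple_graph V E \<longleftrightarrow> finite V \<and> (\<forall>p q. E p q \<longrightarrow> p \<in> V \<and> q \<in> V \<and> E q p \<and> p \<noteq> q)"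

definition connected_graph :: "'v set \<Rightarrow> ('v \<Rightarrow> 'v \<Rightarrow> bool) \<Rightarrow> bool" where
  "connected_graph V E \<longleftrightarrow> V \<noteq> {} \<and> (\<forall>p\<in>V. \<forall>q\<in>V. (p, q) \<in> {(x, y). E x y}\<^sup>*)"

definition four_valent :: "'v set \<Rightarrow> ('v \<Rightarrow> 'v \<Rightarrow> bool) \<Rightarrow> bool" where
  "four_valent V E \<longleftrightarrow> (\<forall>p\<in>V. card {q \<in> V. E p q} = 4)"

text \<open>An orientation at each vertex: the four neighbours of p listed as rot p 0, rot p 1,
  rot p 2, rot p 3, the cyclic order being 0 -> 1 -> 2 -> 3 -> 0.\<close>
definition orientation :: "'v set \<Rightarrow> ('v \<Rightarrow> 'v \<Rightarrow> bool) \<Rightarrow> ('v \<Rightarrow> nat \<Rightarrow> 'v) \<Rightarrow> bool" where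
  "orientation V E rot \<longleftrightarrow> (\<forall>p\<in>V. bij_betw (rot p) {0..<4} {q \<in> V. E p q})"

text \<open>Unit square with lower-left corner (x,y), 0 <= x,y < k, of the square [0,k]^2.\<close>
definition cluster_vertices :: "nat \<Rightarrow> (nat \<times> nat) set" where
  "cluster_vertices k = {0..<k} \<times> {0..<k}"

definition grid_adj :: "nat \<times> nat \<Rightarrow> nat \<times> nat \<Rightarrow> bool" where
  "grid_adj c d \<longleftrightarrow>
     (fst c = fst d \<and> (snd d = snd c + 1 \<or> snd c = snd d + 1)) \<or>
     (snd c = snd d \<and> (fst d = fst c + 1 \<or> fst c = fst d + 1))"

text \<open>Sides of the square [0,k]^2 in counterclockwise order: 0 bottom (0 to k), 1 right (k to (1+i)k),
  2 top ((1+i)k to ik), 3 left (ik to 0).  boundary_cell k a t is the unit square adjacent to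
  side a at position t (t = 0,...,k-1), counted along the counterclockwise direction of the side.\<close>
definition boundary_cell :: "nat \<Rightarrow> nat \<Rightarrow> nat \<Rightarrow> nat \<times> nat" where
  "boundary_cell k a t =
     (if a = 0 then (t, 0)
      else if a = 1 then (k - 1, t)
      else if a = 2 then (k - 1 - t, k - 1)
      else (0, k - 1 - t))"

definition gc_vertices :: "'v set \<Rightarrow> nat \<Rightarrow> ('v \<times> (nat \<times> nat)) set" where
  "gc_vertices V k = V \<times> cluster_vertices k"

text \<open>Side a of the copy of p corresponds to edge p -- rot p a.  Gluing along edge e = pq, with e
  on side a of p and side b of q: the copies are placed (orientation preserving) side by side, so the
  cell at position t along side a of p is adjacent to the cell at position k-1-t along side b of q.\<close>
definition gc_adj :: "('v \<Rightarrow> 'v \<Rightarrow> bool) \<Rightarrow> ('v \<Rightarrow> nat \<Rightarrow> 'v) \<Rightarrow> nat \<Rightarrow>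
    'v \<times> (nat \<times> nat) \<Rightarrow> 'v \<times> (nat \<times> nat) \<Rightarrow> bool" where
  "gc_adj E rot k x y \<longleftrightarrow>
     (fst x = fst y \<and> grid_adj (snd x) (snd y)) \<or>
     (E (fst x) (fst y) \<and>
      (\<exists>a<4. \<exists>b<4. \<exists>t<k. rot (fst x) a = fst y \<and> rot (fst y) b = fst x \<and>
          snd x = boundary_cell k a t \<and> snd y = boundary_cell k b (k - 1 - t)))"

definition delta :: "nat \<Rightarrow> nat \<Rightarrow> real" where
  "delta k j =
     (if int j \<le> int k ^ 2 - 4 * int k + 4 then 0
      else if int j \<le> int k ^ 2 - 4 then 1
      else 2)"

end

theory Submission
  imports Defs "Jordan_Normal_Form.Schur_Decomposition" "Jordan_Normal_Form.Char_Poly"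
    "HOL-Combinatorics.List_Permutation"
begin

lemma sym_real_eigenvalue:
  fixes A :: "real mat"
  assumes A: "A \<in> carrier_mat n n" and sym: "A\<^sup>T = A" and n: "n > 0"
  shows "\<exists>e. eigenvalue A e"
proof -
  let ?Ac = "map_mat complex_of_real A"
  have Ac: "?Ac \<in> carrier_mat n n" using A by auto
  from char_poly_factorized[OF Ac] obtain as where cp: "char_poly ?Ac = (\<Prod>a\<leftarrow>as. [:-a,1:])"
    and len: "length as = n" by blast
  from len n obtain a where a: "a \<in> set as" by (cases as) auto
  have "poly (char_poly ?Ac) a = 0" unfolding cp using linear_poly_root[OF a] .
  then have "eigenvalue ?Ac a" using eigenvalue_root_char_poly[OF Ac] by simp
  then obtain v where v: "v \<in> carrier_vec n" "v \<noteq> 0\<^sub>v n" "?Ac *\<^sub>v v = a \<cdot>\<^sub>v v"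
    using Ac by (auto simp: eigenvalue_def eigenvector_def)
  have Aij: "A $$ (i,j) = A $$ (j,i)" if "i < n" "j < n" for i j
    using sym that A by (metis carrier_matD(1) carrier_matD(2) index_transpose_mat(1))
  have Avi: "(\<Sum>j<n. complex_of_real (A$$(i,j)) * v$j) = a * v$i" if i: "i < n" for i
  proof -
    have "(?Ac *\<^sub>v v) $ i = a * v $ i" using v(3) v(1) i by simp
    moreover have "(?Ac *\<^sub>v v) $ i = (\<Sum>j<n. complex_of_real (A$$(i,j)) * v$j)"
      using i A v(1) by (auto simp: scalar_prod_def lessThan_atLeast0 intro!: sum.cong)
    ultimately show ?thesis by simp
  qed
  define s where "s = (\<Sum>i<n. cnj (v$i) * (\<Sum>j<n. complex_of_real (A$$(i,j)) * v$j))"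
  define r where "r = (\<Sum>i<n. cnj (v$i) * v$i)"
  have "s = (\<Sum>i<n. cnj (v$i) * (a * v$i))" unfolding s_def
    by (rule sum.cong) (simp_all add: Avi)
  then have s1: "s = a * r" unfolding r_def
    by (simp add: sum_distrib_left algebra_simps)
  have "cnj s = (\<Sum>i<n. \<Sum>j<n. v$i * complex_of_real (A$$(i,j)) * cnj (v$j))"
    unfolding s_def by (simp add: sum_distrib_left algebra_simps)
  also have "\<dots> = (\<Sum>j<n. \<Sum>i<n. v$i * complex_of_real (A$$(i,j)) * cnj (v$j))"
    by (rule sum.swap)
  also have "\<dots> = s" unfolding s_def
    by (auto simp: sum_distrib_left algebra_simps Aij intro!: sum.cong)
  finally have s2: "cnj s = s" .
  have r: "r = complex_of_real (\<Sum>i<n. (cmod (v$i))\<^sup>2)" unfolding r_def of_real_sum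
    by (rule sum.cong) (simp_all add: complex_norm_square[symmetric] mult.commute)
  obtain i where i: "i < n" "v $ i \<noteq> 0" using v(1,2) by (metis carrier_vecD eq_vecI index_zero_vec(1) index_zero_vec(2))
  have "(\<Sum>i<n. (cmod (v$i))\<^sup>2) \<ge> (cmod (v$i))\<^sup>2"
    by (rule member_le_sum) (use i in auto)
  moreover have "(cmod (v$i))\<^sup>2 > 0" using i by simp
  ultimately have rpos: "(\<Sum>i<n. (cmod (v$i))\<^sup>2) > 0" by linarith
  have "cnj a * r = a * r" using s1 s2 r by (metis complex_cnj_complex_of_real complex_cnj_mult)
  moreover have "r \<noteq> 0" using rpos r by (metis of_real_eq_0_iff less_irrefl)
  ultimately have "cnj a = a" by simp
  then have areal: "a = complex_of_real (Re a)" by (metis Reals_cnj_iff complex_is_Real_iff of_real_Re)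
  have "poly (char_poly ?Ac) a = poly (map_poly of_real (char_poly A)) (complex_of_real (Re a))"
    using of_real_hom.char_poly_hom[OF A] areal by metis
  also have "\<dots> = complex_of_real (poly (char_poly A) (Re a))"
    by (rule of_real_hom.poly_map_poly)
  finally have "complex_of_real (poly (char_poly A) (Re a)) = poly (char_poly ?Ac) a" by simp
  also have "\<dots> = 0" using \<open>poly (char_poly ?Ac) a = 0\<close> .
  finally have "poly (char_poly A) (Re a) = 0" by simp
  then show ?thesis using eigenvalue_root_char_poly[OF A] by blast
qed

lemma real_self_sprod_ge0: "(w :: real vec) \<bullet> w \<ge> 0"
  unfolding scalar_prod_def by (auto intro: sum_nonneg)

lemma real_cscalar: "(v :: real vec) \<bullet>c w = v \<bullet> w"
  by (simp add: vec_conjugate_real)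

lemma onb_extend:
  fixes u :: "real vec"
  assumes u: "u \<in> carrier_vec n" and u1: "u \<bullet> u = 1"
  shows "\<exists>W \<in> carrier_mat n n. W\<^sup>T * W = 1\<^sub>m n \<and> col W 0 = u"
proof -
  have u0: "u \<noteq> 0\<^sub>v n" using u1 u by auto
  have n: "n > 0"
  proof (rule ccontr)
    assume "\<not> n > 0" then have "n = 0" by simp
    then have "u \<bullet> u = 0" using u by (simp add: scalar_prod_def)
    then show False using u1 by simp
  qed
  interpret cof_vec_space n "TYPE(real)" .
  define b where "b = basis_completion u"
  from basis_completion[OF u u0, folded b_def]
  have dist_b: "distinct b" and indep: "\<not> lin_dep (set b)" and bc: "set b \<subseteq> carrier_vec n"
    and hdb: "hd b = u" and len_b: "length b = n" by auto
  from hdb len_b n obtain vs where bv: "b = u # vs" by (cases b, auto)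
  define ws where "ws = gram_schmidt n b"
  from gram_schmidt_result[OF bc dist_b indep ws_def]
  have ws: "set ws \<subseteq> carrier_vec n" "corthogonal ws" "length ws = n"
    by (auto simp: len_b)
  have hdws: "hd ws = u" unfolding ws_def bv using gram_schmidt_hd[OF u] by simp
  have wsc: "ws ! i \<in> carrier_vec n" if "i < n" for i using ws that by auto
  have wpos: "ws ! i \<bullet> ws ! i > 0" if i: "i < n" for i
  proof -
    have "ws ! i \<bullet> ws ! i \<noteq> 0" using ws(2) i ws(3) unfolding corthogonal_def real_cscalar by auto
    with real_self_sprod_ge0[of "ws ! i"] show ?thesis by linarith
  qed
  have worth: "ws ! i \<bullet> ws ! j = 0" if "i < n" "j < n" "i \<noteq> j" for i j
    using ws(2) that ws(3) unfolding corthogonal_def real_cscalar by auto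
  define ws' where "ws' = map (\<lambda>w. (1 / sqrt (w \<bullet> w)) \<cdot>\<^sub>v w) ws"
  have len': "length ws' = n" unfolding ws'_def using ws by simp
  have ws'i: "ws' ! i = (1 / sqrt (ws ! i \<bullet> ws ! i)) \<cdot>\<^sub>v ws ! i" if "i < n" for i
    unfolding ws'_def using that ws(3) by simp
  have ws'c: "ws' ! i \<in> carrier_vec n" if "i < n" for i using ws'i[OF that] wsc[OF that] by simp
  have orth': "ws' ! i \<bullet> ws' ! j = (if i = j then 1 else 0)" if i: "i < n" and j: "j < n" for i j
  proof -
    have "ws' ! i \<bullet> ws' ! j = (1 / sqrt (ws ! i \<bullet> ws ! i)) * (1 / sqrt (ws ! j \<bullet> ws ! j)) * (ws ! i \<bullet> ws ! j)"
      unfolding ws'i[OF i] ws'i[OF j]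
      using wsc[OF i] wsc[OF j] by (simp add: smult_scalar_prod_distrib scalar_prod_smult_distrib)
    also have "\<dots> = (if i = j then 1 else 0)"
    proof (cases "i = j")
      case True
      have p: "ws ! i \<bullet> ws ! i > 0" using wpos[OF i] .
      have "(1 / sqrt (ws ! i \<bullet> ws ! i)) * (1 / sqrt (ws ! i \<bullet> ws ! i)) = 1 / (ws ! i \<bullet> ws ! i)"
        using p by (simp add: real_sqrt_mult[symmetric])
      then show ?thesis using True p by simp
    next
      case False
      then show ?thesis using worth[OF i j] by simp
    qed
    finally show ?thesis .
  qed
  define W where "W = mat_of_cols n ws'"
  have W: "W \<in> carrier_mat n n" unfolding W_def using len' mat_of_cols_carrier(1)[of n ws'] by simp
  have colW: "col W i = ws' ! i" if "i < n" for i
    unfolding W_def using col_mat_of_cols[of i ws' n] that len' ws'c[OF that] by simp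
  have "W\<^sup>T * W = 1\<^sub>m n"
  proof (rule eq_matI)
    fix i j assume i: "i < dim_row (1\<^sub>m n)" and j: "j < dim_col (1\<^sub>m n)"
    then have i': "i < n" and j': "j < n" by auto
    have "(W\<^sup>T * W) $$ (i, j) = row W\<^sup>T i \<bullet> col W j"
      using W i' j' by (simp add: index_mult_mat)
    also have "\<dots> = col W i \<bullet> col W j" using W i' by simp
    also have "\<dots> = (if i = j then 1 else 0)" using colW[OF i'] colW[OF j'] orth'[OF i' j'] by simp
    finally show "(W\<^sup>T * W) $$ (i, j) = 1\<^sub>m n $$ (i, j)" using i' j' by simp
  qed (use W in auto)
  moreover have "col W 0 = u"
  proof -
    have "ws ! 0 = u" using hdws ws(3) n by (metis hd_conv_nth list.size(3) neq0_conv)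
    then have "ws' ! 0 = u" using ws'i[OF n] u1 by simp
    then show ?thesis using colW[OF n] by simp
  qed
  ultimately show ?thesis using W by blast
qed

lemma block_diag_mult:
  fixes a b :: "'a :: comm_ring_1 mat"
  assumes a: "a \<in> carrier_mat 1 1" and b: "b \<in> carrier_mat 1 1"
    and X: "X \<in> carrier_mat m m" and Y: "Y \<in> carrier_mat m m"
  shows "four_block_mat a (0\<^sub>m 1 m) (0\<^sub>m m 1) X * four_block_mat b (0\<^sub>m 1 m) (0\<^sub>m m 1) Y
       = four_block_mat (a * b) (0\<^sub>m 1 m) (0\<^sub>m m 1) (X * Y)"
  by (subst mult_four_block_mat[OF a _ _ X b _ _ Y]) (use a b X Y in auto)

lemma block_diag_transpose:
  fixes a :: "'a :: comm_ring_1 mat"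
  assumes a: "a \<in> carrier_mat 1 1" and X: "X \<in> carrier_mat m m"
  shows "(four_block_mat a (0\<^sub>m 1 m) (0\<^sub>m m 1) X)\<^sup>T = four_block_mat a\<^sup>T (0\<^sub>m 1 m) (0\<^sub>m m 1) X\<^sup>T"
  by (subst transpose_four_block_mat[OF a _ _ X]) auto

lemma real_sym_spectral:
  fixes A :: "real mat"
  assumes "A \<in> carrier_mat n n" "A\<^sup>T = A"
  shows "\<exists>P D. P \<in> carrier_mat n n \<and> D \<in> carrier_mat n n \<and> diagonal_mat D \<and>
     P\<^sup>T * P = 1\<^sub>m n \<and> A = P * D * P\<^sup>T"
  using assms
proof (induction n arbitrary: A)
  case 0
  show ?case
    by (rule exI[of _ "1\<^sub>m 0"], rule exI[of _ "1\<^sub>m 0"])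
       (use 0 in \<open>auto simp: diagonal_mat_def intro!: eq_matI\<close>)
next
  case (Suc m)
  note A = Suc.prems(1) and sym = Suc.prems(2)
  let ?n = "Suc m"
  obtain e where e: "eigenvalue A e" using sym_real_eigenvalue[OF A sym] by auto
  define v where "v = find_eigenvector A e"
  have ev: "eigenvector A v e" unfolding v_def by (rule find_eigenvector[OF A e])
  then have v: "v \<in> carrier_vec ?n" and v0: "v \<noteq> 0\<^sub>v ?n" and Av: "A *\<^sub>v v = e \<cdot>\<^sub>v v"
    using A unfolding eigenvector_def by auto
  have vv: "v \<bullet> v > 0"
  proof -
    obtain i where i: "i < ?n" "v $ i \<noteq> 0" using v v0 by (metis carrier_vecD eq_vecI index_zero_vec(1) index_zero_vec(2))
    have "v \<bullet> v = (\<Sum>j\<in>{0..<?n}. v $ j * v $ j)" using v by (simp add: scalar_prod_def)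
    also have "\<dots> \<ge> v $ i * v $ i" by (rule member_le_sum) (use i in auto)
    finally show ?thesis using i by (smt (verit) not_real_square_gt_zero)
  qed
  define u where "u = (1 / sqrt (v \<bullet> v)) \<cdot>\<^sub>v v"
  have u: "u \<in> carrier_vec ?n" unfolding u_def using v by simp
  have uu: "u \<bullet> u = 1" unfolding u_def using v vv
    by (simp add: smult_scalar_prod_distrib scalar_prod_smult_distrib real_sqrt_mult[symmetric])
  have Au: "A *\<^sub>v u = e \<cdot>\<^sub>v u" unfolding u_def using A v Av
    by (simp add: mult_mat_vec smult_smult_assoc mult.commute)
  obtain W where W: "W \<in> carrier_mat ?n ?n" and WW: "W\<^sup>T * W = 1\<^sub>m ?n" and W0: "col W 0 = u"
    using onb_extend[OF u uu] by blast
  have WT: "W\<^sup>T \<in> carrier_mat ?n ?n" using W by simp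
  have WW': "W * W\<^sup>T = 1\<^sub>m ?n" using mat_mult_left_right_inverse[OF WT W WW] .
  define A' where "A' = W\<^sup>T * A * W"
  have A': "A' \<in> carrier_mat ?n ?n" unfolding A'_def using W A by simp
  have symA': "A'\<^sup>T = A'"
  proof -
    have AW: "A * W \<in> carrier_mat ?n ?n" using A W by simp
    have "A'\<^sup>T = (W\<^sup>T * (A * W))\<^sup>T" unfolding A'_def using W A by (simp add: assoc_mult_mat)
    also have "\<dots> = (A * W)\<^sup>T * W" using transpose_mult[OF WT AW] by simp
    also have "(A * W)\<^sup>T = W\<^sup>T * A" using transpose_mult[OF A W] sym by simp
    finally show ?thesis unfolding A'_def .
  qed
  have A'col: "A' $$ (i, 0) = (if i = 0 then e else 0)" if i: "i < ?n" for i
  proof -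
    have "A' = W\<^sup>T * (A * W)" unfolding A'_def using W A by (simp add: assoc_mult_mat)
    then have "A' $$ (i, 0) = row W\<^sup>T i \<bullet> col (A * W) 0" using i W A by (simp add: index_mult_mat)
    also have "col (A * W) 0 = A *\<^sub>v u" using col_mult2[OF A W, of 0] W0 by simp
    also have "\<dots> = e \<cdot>\<^sub>v u" by (rule Au)
    also have "row W\<^sup>T i \<bullet> (e \<cdot>\<^sub>v u) = e * (row W\<^sup>T i \<bullet> u)"
      using W i u by (simp add: scalar_prod_smult_distrib[of _ ?n])
    also have "row W\<^sup>T i \<bullet> u = (W\<^sup>T * W) $$ (i, 0)" using i W W0 by (simp add: index_mult_mat)
    also have "\<dots> = (if i = 0 then 1 else 0)" using WW i by simp
    finally show ?thesis by simp
  qed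
  define A3 where "A3 = mat m m (\<lambda>(i,j). A' $$ (Suc i, Suc j))"
  have A3: "A3 \<in> carrier_mat m m" unfolding A3_def by simp
  have symA3: "A3\<^sup>T = A3"
  proof (rule eq_matI)
    fix i j assume "i < dim_row A3" "j < dim_col A3"
    then have ij: "i < m" "j < m" using A3 by auto
    have "A' $$ (Suc j, Suc i) = A'\<^sup>T $$ (Suc i, Suc j)" using A' ij by simp
    then show "A3\<^sup>T $$ (i, j) = A3 $$ (i, j)" using ij symA' unfolding A3_def by simp
  qed (use A3 in auto)
  from Suc.IH[OF A3 symA3] obtain P3 D3 where P3: "P3 \<in> carrier_mat m m" and D3: "D3 \<in> carrier_mat m m"
    and dD3: "diagonal_mat D3" and PP3: "P3\<^sup>T * P3 = 1\<^sub>m m" and A3eq: "A3 = P3 * D3 * P3\<^sup>T" by blast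
  define E where "E = mat 1 1 (\<lambda>_. e)"
  have E: "E \<in> carrier_mat 1 1" unfolding E_def by simp
  have one1: "(1\<^sub>m 1 :: real mat) \<in> carrier_mat 1 1" by simp
  define B where "B = four_block_mat (1\<^sub>m 1) (0\<^sub>m 1 m) (0\<^sub>m m 1) P3"
  define D where "D = four_block_mat E (0\<^sub>m 1 m) (0\<^sub>m m 1) D3"
  have B: "B \<in> carrier_mat ?n ?n" unfolding B_def using four_block_carrier_mat[OF one1 P3] by simp
  have D: "D \<in> carrier_mat ?n ?n" unfolding D_def using four_block_carrier_mat[OF E D3] by simp
  have BT: "B\<^sup>T = four_block_mat (1\<^sub>m 1) (0\<^sub>m 1 m) (0\<^sub>m m 1) P3\<^sup>T"
    unfolding B_def by (subst block_diag_transpose[OF one1 P3]) simp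
  have BB: "B\<^sup>T * B = 1\<^sub>m ?n"
    unfolding BT unfolding B_def
    by (subst block_diag_mult[OF one1 one1 _ P3]) (use P3 PP3 in auto)
  have A'eq: "A' = four_block_mat E (0\<^sub>m 1 m) (0\<^sub>m m 1) A3"
  proof (rule eq_matI)
    fix i j assume "i < dim_row (four_block_mat E (0\<^sub>m 1 m) (0\<^sub>m m 1) A3)"
      "j < dim_col (four_block_mat E (0\<^sub>m 1 m) (0\<^sub>m m 1) A3)"
    then have ij: "i < ?n" "j < ?n" using E A3 by auto
    show "A' $$ (i, j) = four_block_mat E (0\<^sub>m 1 m) (0\<^sub>m m 1) A3 $$ (i, j)"
    proof (cases "j = 0")
      case True
      then show ?thesis using A'col[OF ij(1)] ij E A3 by (auto simp: E_def)
    next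
      case False
      show ?thesis
      proof (cases "i = 0")
        case True
        have "A' $$ (0, j) = A'\<^sup>T $$ (j, 0)" using A' ij by simp
        also have "\<dots> = 0" using symA' A'col[OF ij(2)] False by simp
        finally show ?thesis using True False ij E A3 by simp
      next
        case False2: False
        then show ?thesis using False ij E A3 unfolding A3_def by auto
      qed
    qed
  qed (use A' E A3 in auto)
  have BDB: "B * D * B\<^sup>T = A'"
  proof -
    have "B * D = four_block_mat E (0\<^sub>m 1 m) (0\<^sub>m m 1) (P3 * D3)"
      unfolding B_def D_def by (subst block_diag_mult[OF one1 E P3 D3]) (use E in simp)
    moreover have "four_block_mat E (0\<^sub>m 1 m) (0\<^sub>m m 1) (P3 * D3) * B\<^sup>T
        = four_block_mat E (0\<^sub>m 1 m) (0\<^sub>m m 1) (P3 * D3 * P3\<^sup>T)"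
      unfolding BT by (subst block_diag_mult[OF E one1 _ _]) (use E P3 D3 in auto)
    ultimately show ?thesis using A'eq A3eq by simp
  qed
  define P where "P = W * B"
  have P: "P \<in> carrier_mat ?n ?n" unfolding P_def using W B by simp
  have PP: "P\<^sup>T * P = 1\<^sub>m ?n"
  proof -
    have "P\<^sup>T * P = B\<^sup>T * (W\<^sup>T * W) * B" unfolding P_def using W B
      by (simp add: transpose_mult[OF W B] assoc_mult_mat[of _ ?n ?n _ ?n _ ?n])
    then show ?thesis using WW BB B by simp
  qed
  have "P * D * P\<^sup>T = W * (B * D * B\<^sup>T) * W\<^sup>T" unfolding P_def using W B D
    by (simp add: transpose_mult[OF W B] assoc_mult_mat[of _ ?n ?n _ ?n _ ?n])
  also have "\<dots> = W * A' * W\<^sup>T" using BDB by simp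
  also have "\<dots> = (W * W\<^sup>T) * A * (W * W\<^sup>T)" unfolding A'_def using W A
    by (simp add: assoc_mult_mat[of _ ?n ?n _ ?n _ ?n])
  also have "\<dots> = A" using WW' A by simp
  finally have AP: "A = P * D * P\<^sup>T" by simp
  have dD: "diagonal_mat D"
    unfolding diagonal_mat_def D_def using dD3 D3 E
    by (auto simp: diagonal_mat_def E_def)
  show ?case using P D dD PP AP by blast
qed

lemma map_permutation_apply:
  assumes "inj_on f A" "x \<in> A"
  shows "map_permutation A f p (f x) = f (p x)"
  using assms unfolding map_permutation_def restrict_id_def by auto

lemma charpoly_transfer:
  fixes M :: "'a \<Rightarrow> 'a \<Rightarrow> real"
  assumes f: "bij_betw f {0..<n} S"
  shows "charpoly S M = char_poly (mat n n (\<lambda>(i,j). M (f i) (f j)))"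
proof -
  let ?A = "mat n n (\<lambda>(i,j). M (f i) (f j))"
  let ?F = "\<lambda>v w. [: - M v w, (if w = v then 1 else 0) :]"
  have inj: "inj_on f {0..<n}" using f by (auto simp: bij_betw_def)
  have fin: "finite {0..<n}" by simp
  let ?mp = "map_permutation {0..<n} f"
  define g where "g = inv_into {0..<n} f"
  have g: "bij_betw g S {0..<n}" unfolding g_def by (rule bij_betw_inv_into[OF f])
  have gf: "g (f i) = i" if "i \<in> {0..<n}" for i unfolding g_def using inj that by simp
  have bij: "bij_betw ?mp {p. p permutes {0..<n}} {\<sigma>. \<sigma> permutes S}"
  proof (rule bij_betw_byWitness[where f' = "map_permutation S g"])
    show "\<forall>p\<in>{p. p permutes {0..<n}}. map_permutation S g (?mp p) = p"
    proof
      fix p assume p: "p \<in> {p. p permutes {0..<n}}"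
      have "map_permutation S g (?mp p) = map_permutation {0..<n} (g \<circ> f) p"
        by (rule map_permutation_compose[OF f]) (use g in \<open>auto simp: bij_betw_def\<close>)
      also have "\<dots> = map_permutation {0..<n} id p"
        by (rule map_permutation_cong) (use p gf in \<open>auto simp: inj_on_def\<close>)
      also have "\<dots> = p" using p by simp
      finally show "map_permutation S g (?mp p) = p" .
    qed
    show "\<forall>\<sigma>\<in>{\<sigma>. \<sigma> permutes S}. ?mp (map_permutation S g \<sigma>) = \<sigma>"
    proof
      fix \<sigma> assume s: "\<sigma> \<in> {\<sigma>. \<sigma> permutes S}"
      have fg: "f (g s) = s" if "s \<in> S" for s unfolding g_def using f that by (simp add: bij_betw_inv_into_right)
      have "?mp (map_permutation S g \<sigma>) = map_permutation S (f \<circ> g) \<sigma>"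
        by (rule map_permutation_compose[OF g]) (use inj in auto)
      also have "\<dots> = map_permutation S id \<sigma>"
        by (rule map_permutation_cong) (use s fg g in \<open>auto simp: bij_betw_def inj_on_def\<close>)
      also have "\<dots> = \<sigma>" using s by simp
      finally show "?mp (map_permutation S g \<sigma>) = \<sigma>" .
    qed
    show "?mp ` {p. p permutes {0..<n}} \<subseteq> {\<sigma>. \<sigma> permutes S}"
      using map_permutation_permutes[OF f] by auto
    show "map_permutation S g ` {\<sigma>. \<sigma> permutes S} \<subseteq> {p. p permutes {0..<n}}"
      using map_permutation_permutes[OF g] by auto
  qed
  have "charpoly S M = (\<Sum>\<sigma>\<in>{\<sigma>. \<sigma> permutes S}. of_int (sign \<sigma>) * (\<Prod>v\<in>S. ?F v (\<sigma> v)))"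
    unfolding charpoly_def by simp
  also have "\<dots> = (\<Sum>p\<in>{p. p permutes {0..<n}}. of_int (sign (?mp p)) * (\<Prod>v\<in>S. ?F v (?mp p v)))"
    by (rule sum.reindex_bij_betw[OF bij, symmetric])
  also have "\<dots> = (\<Sum>p\<in>{p. p permutes {0..<n}}. of_int (sign p) * (\<Prod>i\<in>{0..<n}. char_poly_matrix ?A $$ (i, p i)))"
  proof (rule sum.cong[OF refl])
    fix p assume p: "p \<in> {p. p permutes {0..<n}}"
    have sg: "sign (?mp p) = sign p" using sign_map_permutation[OF inj _ fin] p by simp
    have "(\<Prod>v\<in>S. ?F v (?mp p v)) = (\<Prod>i\<in>{0..<n}. ?F (f i) (?mp p (f i)))"
      by (rule prod.reindex_bij_betw[OF f, symmetric])
    also have "\<dots> = (\<Prod>i\<in>{0..<n}. char_poly_matrix ?A $$ (i, p i))"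
    proof (rule prod.cong[OF refl])
      fix i assume i: "i \<in> {0..<n}"
      have pi: "p i \<in> {0..<n}" using p i by (simp add: permutes_in_image)
      have "?mp p (f i) = f (p i)" using map_permutation_apply[OF inj i] .
      moreover have "(f (p i) = f i) = (p i = i)" using inj i pi by (auto simp: inj_on_def)
      ultimately show "?F (f i) (?mp p (f i)) = char_poly_matrix ?A $$ (i, p i)"
        using i pi by (auto simp: char_poly_matrix_def)
    qed
    finally show "of_int (sign (?mp p)) * (\<Prod>v\<in>S. ?F v (?mp p v)) =
      of_int (sign p) * (\<Prod>i\<in>{0..<n}. char_poly_matrix ?A $$ (i, p i))" using sg by simp
  qed
  also have "\<dots> = char_poly ?A"
    unfolding char_poly_def det_def by (simp add: char_poly_matrix_def)
  finally show ?thesis .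
qed

lemma linprod_mset_inj:
  "prod_mset (image_mset (\<lambda>a. [:-a,1::real:]) A) = prod_mset (image_mset (\<lambda>a. [:-a,1:]) B) \<Longrightarrow> A = B"
proof (induction A arbitrary: B)
  case empty
  show ?case
  proof (rule ccontr)
    assume "{#} \<noteq> B"
    then obtain x where x: "x \<in># B" by (metis multiset_nonemptyE)
    have "poly (prod_mset (image_mset (\<lambda>a. [:-a,1::real:]) B)) x = 0"
      using x by (auto simp: poly_prod_mset prod_mset_zero_iff)
    then show False using empty by simp
  qed
next
  case (add x A)
  have "poly (prod_mset (image_mset (\<lambda>a. [:-a,1::real:]) B)) x = 0"
    using add.prems[symmetric] by (simp add: poly_prod_mset)
  then have "x \<in># B" by (auto simp: poly_prod_mset prod_mset_zero_iff)
  then obtain B' where B: "B = add_mset x B'" by (metis multi_member_split)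
  have "[:-x,1:] * prod_mset (image_mset (\<lambda>a. [:-a,1::real:]) A) = [:-x,1:] * prod_mset (image_mset (\<lambda>a. [:-a,1::real:]) B')"
    using add.prems unfolding B by simp
  then have "prod_mset (image_mset (\<lambda>a. [:-a,1::real:]) A) = prod_mset (image_mset (\<lambda>a. [:-a,1::real:]) B')"
    by (metis mult_left_cancel pCons_eq_0_iff one_neq_zero)
  from add.IH[OF this] show ?case unfolding B by simp
qed

lemma prodlist_mset: "(\<Prod>x\<leftarrow>xs. [:-x,1::real:]) = prod_mset (image_mset (\<lambda>a. [:-a,1:]) (mset xs))"
  by (metis mset_map prod_mset_prod_list)

lemma eigenvalues_eq:
  assumes "sorted xs" "charpoly S M = (\<Prod>x\<leftarrow>xs. [:-x,1:])"
  shows "eigenvalues S M = xs"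
  unfolding eigenvalues_def
proof (rule the_equality)
  show "sorted xs \<and> charpoly S M = (\<Prod>x\<leftarrow>xs. [:-x,1:])" using assms by simp
  fix ys assume ys: "sorted ys \<and> charpoly S M = (\<Prod>x\<leftarrow>ys. [:-x,1:])"
  then have "mset ys = mset xs" using assms(2) linprod_mset_inj by (metis prodlist_mset)
  then show "ys = xs" using ys assms(1) by (metis properties_for_sort sorted_sort_id)
qed

lemma mat_mult_entry:
  assumes "X \<in> carrier_mat n n" "Y \<in> carrier_mat n n" "i < n" "j < n"
  shows "(X * Y) $$ (i,j) = (\<Sum>k<n. X $$ (i,k) * Y $$ (k,j))"
  using assms by (simp add: index_mult_mat scalar_prod_def lessThan_atLeast0)

definition fdot :: "'a set \<Rightarrow> ('a \<Rightarrow> real) \<Rightarrow> ('a \<Rightarrow> real) \<Rightarrow> real" where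
  "fdot S x y = (\<Sum>s\<in>S. x s * y s)"

lemma spectral_fun:
  fixes M :: "'a \<Rightarrow> 'a \<Rightarrow> real"
  assumes fin: "finite S" and sym: "\<And>a b. a \<in> S \<Longrightarrow> b \<in> S \<Longrightarrow> M a b = M b a"
  shows "length (eigenvalues S M) = card S \<and> sorted (eigenvalues S M) \<and>
    (\<exists>vec. (\<forall>i<card S. \<forall>j<card S. fdot S (vec i) (vec j) = (if i = j then 1 else 0)) \<and>
      (\<forall>i<card S. \<forall>a\<in>S. (\<Sum>b\<in>S. M a b * vec i b) = eigenvalues S M ! i * vec i a))"
proof -
  define n where "n = card S"
  obtain f where f: "bij_betw f {0..<n} S" using ex_bij_betw_nat_finite[OF fin] unfolding n_def by blast
  define g where "g = inv_into {0..<n} f"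
  have inj: "inj_on f {0..<n}" using f by (auto simp: bij_betw_def)
  have gf: "g (f i) = i" if "i < n" for i unfolding g_def using inj that by simp
  have fg: "f (g s) = s" if "s \<in> S" for s unfolding g_def using f that by (simp add: bij_betw_inv_into_right)
  have g: "bij_betw g S {0..<n}" unfolding g_def by (rule bij_betw_inv_into[OF f])
  have gS: "g s < n" if "s \<in> S" for s using g that by (auto simp: bij_betw_def)
  define A where "A = mat n n (\<lambda>(i,j). M (f i) (f j))"
  have A: "A \<in> carrier_mat n n" unfolding A_def by simp
  have fS: "f i \<in> S" if "i < n" for i using f that by (auto simp: bij_betw_def)
  have symA: "A\<^sup>T = A" unfolding A_def by (rule eq_matI) (auto simp: sym fS)
  obtain P D where P: "P \<in> carrier_mat n n" and D: "D \<in> carrier_mat n n" and dD: "diagonal_mat D"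
    and PP: "P\<^sup>T * P = 1\<^sub>m n" and AP: "A = P * D * P\<^sup>T"
    using real_sym_spectral[OF A symA] by blast
  have PT: "P\<^sup>T \<in> carrier_mat n n" using P by simp
  have PP': "P * P\<^sup>T = 1\<^sub>m n" using mat_mult_left_right_inverse[OF PT P PP] .
  have sim: "similar_mat A D"
    by (rule similar_matI[where n=n and P=P and Q="P\<^sup>T"]) (use A D P PP PP' AP in \<open>auto simp: assoc_mult_mat\<close>)
  have ut: "upper_triangular D" using dD D unfolding diagonal_mat_def upper_triangular_def by auto
  define es where "es = diag_mat D"
  have les: "length es = n" unfolding es_def diag_mat_def using D by simp
  have esi: "es ! i = D $$ (i,i)" if "i < n" for i unfolding es_def diag_mat_def using D that by simp
  define xs where "xs = sort es"
  have cp: "charpoly S M = (\<Prod>x\<leftarrow>es. [:-x,1:])"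
    unfolding charpoly_transfer[OF f] A_def[symmetric] char_poly_similar[OF sim] es_def
    by (rule char_poly_upper_triangular[OF D ut])
  have cp2: "charpoly S M = (\<Prod>x\<leftarrow>xs. [:-x,1:])" unfolding cp xs_def prodlist_mset by simp
  have ev: "eigenvalues S M = xs" by (rule eigenvalues_eq) (use cp2 xs_def in auto)
  obtain p where p: "p permutes {..<length es}" and pl: "permute_list p es = xs"
    using mset_eq_permutation[of xs es] unfolding xs_def by auto
  have p': "p permutes {..<n}" using p les by simp
  have pn: "p i < n" if "i < n" for i using permutes_in_image[OF p', of i] that by simp
  have xsi: "xs ! i = es ! p i" if "i < n" for i using permute_list_nth[OF p] that les pl by auto
  define vec where "vec = (\<lambda>i s. P $$ (g s, p i))"
  have sumS: "(\<Sum>s\<in>S. h s) = (\<Sum>k<n. h (f k))" for h :: "'a \<Rightarrow> real"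
    using sum.reindex_bij_betw[OF f, of h] by (simp add: lessThan_atLeast0)
  have orth: "fdot S (vec i) (vec j) = (if i = j then 1 else 0)" if i: "i < n" and j: "j < n" for i j
  proof -
    have "fdot S (vec i) (vec j) = (\<Sum>k<n. P\<^sup>T $$ (p i, k) * P $$ (k, p j))"
      unfolding fdot_def vec_def sumS using P pn[OF i] pn[OF j] by (auto simp: gf intro!: sum.cong)
    also have "\<dots> = (P\<^sup>T * P) $$ (p i, p j)" using mat_mult_entry[OF PT P pn[OF i] pn[OF j]] by simp
    also have "\<dots> = (if i = j then 1 else 0)" using PP pn[OF i] pn[OF j] p' i j
      by (auto simp: permutes_def inj_on_def)
    finally show ?thesis .
  qed
  have AP2: "A * P = P * D"
  proof -
    have "A * P = P * D * (P\<^sup>T * P)" unfolding AP using P D by (simp add: assoc_mult_mat[of _ n n _ n _ n])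
    then show ?thesis using PP P D by simp
  qed
  have eig: "(\<Sum>b\<in>S. M a b * vec i b) = xs ! i * vec i a" if i: "i < n" and a: "a \<in> S" for i a
  proof -
    have "(\<Sum>b\<in>S. M a b * vec i b) = (\<Sum>k<n. A $$ (g a, k) * P $$ (k, p i))"
      unfolding sumS vec_def A_def using gS[OF a] by (auto simp: gf fg[OF a] intro!: sum.cong)
    also have "\<dots> = (A * P) $$ (g a, p i)" using mat_mult_entry[OF A P gS[OF a] pn[OF i]] by simp
    also have "\<dots> = (P * D) $$ (g a, p i)" using AP2 by simp
    also have "\<dots> = (\<Sum>k<n. P $$ (g a, k) * D $$ (k, p i))" using mat_mult_entry[OF P D gS[OF a] pn[OF i]] by simp
    also have "\<dots> = (\<Sum>k<n. if k = p i then P $$ (g a, k) * D $$ (k, p i) else 0)"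
      by (rule sum.cong) (use dD D pn[OF i] in \<open>auto simp: diagonal_mat_def\<close>)
    also have "\<dots> = P $$ (g a, p i) * D $$ (p i, p i)" using pn[OF i] by simp
    also have "\<dots> = xs ! i * vec i a" unfolding vec_def using xsi[OF i] esi[OF pn[OF i]] by simp
    finally show ?thesis .
  qed
  have "length xs = n" unfolding xs_def using les by simp
  moreover have "sorted xs" unfolding xs_def by simp
  moreover have "\<exists>vec. (\<forall>i<card S. \<forall>j<card S. fdot S (vec i) (vec j) = (if i = j then 1 else 0)) \<and>
      (\<forall>i<card S. \<forall>a\<in>S. (\<Sum>b\<in>S. M a b * vec i b) = eigenvalues S M ! i * vec i a)"
    by (rule exI[of _ vec]) (use ev orth eig in \<open>simp add: n_def\<close>)
  ultimately show ?thesis using ev unfolding n_def by auto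
qed

lemma dep:
  fixes v :: "'i \<Rightarrow> 'z \<Rightarrow> real"
  assumes "finite Z" "finite I" "card Z < card I"
  shows "\<exists>c. (\<exists>i\<in>I. c i \<noteq> 0) \<and> (\<forall>z\<in>Z. (\<Sum>i\<in>I. c i * v i z) = 0)"
  using assms
proof (induction Z arbitrary: I v rule: finite_induct)
  case empty
  then obtain i where "i \<in> I" by fastforce
  then show ?case by (intro exI[of _ "\<lambda>_. 1"]) auto
next
  case (insert z Z)
  show ?case
  proof (cases "\<forall>i\<in>I. v i z = 0")
    case True
    have "card Z < card I" using insert by simp
    from insert.IH[OF insert.prems(1) this] obtain c where c: "\<exists>i\<in>I. c i \<noteq> 0"
      "\<forall>z\<in>Z. (\<Sum>i\<in>I. c i * v i z) = 0" by blast
    show ?thesis by (rule exI[of _ c]) (use c True in auto)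
  next
    case False
    then obtain i0 where i0: "i0 \<in> I" "v i0 z \<noteq> 0" by blast
    define I' where "I' = I - {i0}"
    have finI': "finite I'" unfolding I'_def using insert by simp
    have cI': "card Z < card I'" unfolding I'_def using insert i0 by simp
    define w where "w = (\<lambda>i z'. v i z' - (v i z / v i0 z) * v i0 z')"
    from insert.IH[OF finI' cI', of w] obtain c' where c': "\<exists>i\<in>I'. c' i \<noteq> 0"
      "\<forall>z'\<in>Z. (\<Sum>i\<in>I'. c' i * w i z') = 0" by blast
    define c where "c = (\<lambda>i. if i = i0 then - (\<Sum>i\<in>I'. c' i * v i z) / v i0 z else c' i)"
    have sumI: "(\<Sum>i\<in>I. c i * v i z') = c i0 * v i0 z' + (\<Sum>i\<in>I'. c' i * v i z')" for z'
    proof -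
      have "(\<Sum>i\<in>I. c i * v i z') = c i0 * v i0 z' + (\<Sum>i\<in>I'. c i * v i z')"
        unfolding I'_def using i0 insert.prems(1) by (simp add: sum.remove)
      moreover have "(\<Sum>i\<in>I'. c i * v i z') = (\<Sum>i\<in>I'. c' i * v i z')"
        by (rule sum.cong) (auto simp: c_def I'_def)
      ultimately show ?thesis by simp
    qed
    have "\<forall>z'\<in>insert z Z. (\<Sum>i\<in>I. c i * v i z') = 0"
    proof
      fix z' assume z': "z' \<in> insert z Z"
      show "(\<Sum>i\<in>I. c i * v i z') = 0"
      proof (cases "z' = z")
        case True
        then show ?thesis unfolding sumI using i0 by (simp add: c_def)
      next
        case False
        then have zZ: "z' \<in> Z" using z' by simp
        have "(\<Sum>i\<in>I'. c' i * w i z') = (\<Sum>i\<in>I'. c' i * v i z') - (\<Sum>i\<in>I'. c' i * v i z) / v i0 z * v i0 z'"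
          unfolding w_def by (simp add: algebra_simps sum_subtractf sum_distrib_left sum_divide_distrib sum_distrib_right)
        then show ?thesis unfolding sumI using c'(2) zZ by (simp add: c_def)
      qed
    qed
    moreover have "\<exists>i\<in>I. c i \<noteq> 0" using c'(1) unfolding c_def I'_def by auto
    ultimately show ?thesis by blast
  qed
qed

definition qf :: "'a set \<Rightarrow> ('a \<Rightarrow> 'a \<Rightarrow> real) \<Rightarrow> ('a \<Rightarrow> real) \<Rightarrow> real" where
  "qf S M x = (\<Sum>a\<in>S. \<Sum>b\<in>S. x a * M a b * x b)"

lemma fdot_pos:
  assumes "finite S" "s \<in> S" "x s \<noteq> 0"
  shows "fdot S x x > 0"
proof -
  have "fdot S x x \<ge> x s * x s" unfolding fdot_def
    by (rule member_le_sum) (use assms in auto)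
  moreover have "x s * x s > 0" using assms(3) not_real_square_gt_zero by blast
  ultimately show ?thesis by linarith
qed

lemma expand:
  fixes vec :: "nat \<Rightarrow> 'a \<Rightarrow> real" and \<alpha> :: "nat \<Rightarrow> real"
  assumes fin: "finite S"
    and orth: "\<forall>i<n. \<forall>j<n. fdot S (vec i) (vec j) = (if i = j then 1 else 0)"
    and eig: "\<forall>i<n. \<forall>a\<in>S. (\<Sum>b\<in>S. M a b * vec i b) = lam i * vec i a"
    and I: "I \<subseteq> {..<n}"
  defines "y \<equiv> (\<lambda>s. \<Sum>i\<in>I. \<alpha> i * vec i s)"
  shows "\<And>k. k < n \<Longrightarrow> fdot S (vec k) y = (if k \<in> I then \<alpha> k else 0)"
    and "fdot S y y = (\<Sum>i\<in>I. (\<alpha> i)\<^sup>2)"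
    and "qf S M y = (\<Sum>i\<in>I. (\<alpha> i)\<^sup>2 * lam i)"
proof -
  have finI: "finite I" using I finite_subset by blast
  have fv: "fdot S (vec k) y = (if k \<in> I then \<alpha> k else 0)" if k: "k < n" for k
  proof -
    have "fdot S (vec k) y = (\<Sum>i\<in>I. \<alpha> i * fdot S (vec k) (vec i))"
      unfolding fdot_def y_def by (simp add: sum_distrib_left sum.swap[of _ S] algebra_simps)
    also have "\<dots> = (\<Sum>i\<in>I. if i = k then \<alpha> i else 0)"
      by (rule sum.cong) (use orth I k in auto)
    also have "\<dots> = (if k \<in> I then \<alpha> k else 0)" using finI by simp
    finally show ?thesis .
  qed
  then show "\<And>k. k < n \<Longrightarrow> fdot S (vec k) y = (if k \<in> I then \<alpha> k else 0)" by blast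
  have "fdot S y y = (\<Sum>i\<in>I. \<alpha> i * fdot S (vec i) y)"
    unfolding fdot_def y_def by (simp add: sum_distrib_left sum_distrib_right sum.swap[of _ S] algebra_simps)
  also have "\<dots> = (\<Sum>i\<in>I. (\<alpha> i)\<^sup>2)"
    by (rule sum.cong) (use fv I in \<open>auto simp: power2_eq_square\<close>)
  finally show "fdot S y y = (\<Sum>i\<in>I. (\<alpha> i)\<^sup>2)" .
  have My: "(\<Sum>b\<in>S. M a b * y b) = (\<Sum>i\<in>I. \<alpha> i * lam i * vec i a)" if a: "a \<in> S" for a
  proof -
    have "(\<Sum>b\<in>S. M a b * y b) = (\<Sum>i\<in>I. \<alpha> i * (\<Sum>b\<in>S. M a b * vec i b))"
      unfolding y_def by (simp add: sum_distrib_left sum.swap[of _ S] algebra_simps)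
    also have "\<dots> = (\<Sum>i\<in>I. \<alpha> i * lam i * vec i a)"
      by (rule sum.cong) (use eig I a in auto)
    finally show ?thesis .
  qed
  have "qf S M y = (\<Sum>a\<in>S. y a * (\<Sum>b\<in>S. M a b * y b))"
    unfolding qf_def by (simp add: sum_distrib_left algebra_simps)
  also have "\<dots> = (\<Sum>a\<in>S. y a * (\<Sum>i\<in>I. \<alpha> i * lam i * vec i a))"
    by (rule sum.cong) (use My in auto)
  also have "\<dots> = (\<Sum>i\<in>I. \<alpha> i * lam i * fdot S (vec i) y)"
    unfolding fdot_def by (simp add: sum_distrib_left sum.swap[of _ S] algebra_simps)
  also have "\<dots> = (\<Sum>i\<in>I. (\<alpha> i)\<^sup>2 * lam i)"
    by (rule sum.cong) (use fv I in \<open>auto simp: power2_eq_square\<close>)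
  finally show "qf S M y = (\<Sum>i\<in>I. (\<alpha> i)\<^sup>2 * lam i)" .
qed

lemma fdot_comb:
  fixes vec :: "nat \<Rightarrow> 'a \<Rightarrow> real" and \<alpha> :: "nat \<Rightarrow> real"
  assumes orth: "\<forall>i<n. \<forall>j<n. fdot S (vec i) (vec j) = (if i = j then 1 else 0)"
    and I: "I \<subseteq> {..<n}" and k: "k < n"
  shows "fdot S (vec k) (\<lambda>s. \<Sum>i\<in>I. \<alpha> i * vec i s) = (if k \<in> I then \<alpha> k else 0)"
proof -
  have finI: "finite I" using I finite_subset by blast
  have "fdot S (vec k) (\<lambda>s. \<Sum>i\<in>I. \<alpha> i * vec i s) = (\<Sum>i\<in>I. \<alpha> i * fdot S (vec k) (vec i))"
    unfolding fdot_def by (simp add: sum_distrib_left sum.swap[of _ S] algebra_simps)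
  also have "\<dots> = (\<Sum>i\<in>I. if i = k then \<alpha> i else 0)"
    by (rule sum.cong) (use orth I k in auto)
  also have "\<dots> = (if k \<in> I then \<alpha> k else 0)" using finI by simp
  finally show ?thesis .
qed

lemma core:
  fixes vec :: "nat \<Rightarrow> 'a \<Rightarrow> real" and u :: "'j \<Rightarrow> 'a \<Rightarrow> real" and d :: "'l \<Rightarrow> 'a \<Rightarrow> real"
  assumes fin: "finite S" and nS: "card S = n"
    and orth: "\<forall>i<n. \<forall>j<n. fdot S (vec i) (vec j) = (if i = j then 1 else 0)"
    and I: "I \<subseteq> {..<n}" and T: "T \<subseteq> S" and J: "finite J" and L: "finite L"
    and uind: "\<And>\<beta>. (\<forall>s\<in>T. (\<Sum>i\<in>J. \<beta> i * u i s) = 0) \<Longrightarrow> (\<forall>i\<in>J. \<beta> i = 0)"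
    and dind: "\<And>\<gamma>. (\<forall>s\<in>T. (\<Sum>l\<in>L. \<gamma> l * d l s) = 0) \<Longrightarrow> (\<forall>l\<in>L. \<gamma> l = 0)"
    and card: "n + card T < card I + card J + card L"
  shows "\<exists>\<alpha> \<beta> \<gamma>. (\<forall>s\<in>S. (\<Sum>i\<in>J. \<beta> i * u i s) = (\<Sum>i\<in>I. \<alpha> i * vec i s)) \<and>
     (\<forall>s\<in>T. (\<Sum>i\<in>J. \<beta> i * u i s) = (\<Sum>l\<in>L. \<gamma> l * d l s)) \<and>
     (\<exists>s\<in>T. (\<Sum>i\<in>J. \<beta> i * u i s) \<noteq> 0)"
proof -
  have finI: "finite I" using I finite_subset by blast
  have finT: "finite T" using T fin finite_subset by blast
  define w :: "nat + ('j + 'l) \<Rightarrow> 'a + 'a \<Rightarrow> real" where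
    "w = (\<lambda>k z. case k of Inl i \<Rightarrow> (case z of Inl s \<Rightarrow> vec i s | Inr s \<Rightarrow> 0)
        | Inr (Inl a) \<Rightarrow> (case z of Inl s \<Rightarrow> - u a s | Inr s \<Rightarrow> u a s)
        | Inr (Inr l) \<Rightarrow> (case z of Inl s \<Rightarrow> 0 | Inr s \<Rightarrow> - d l s))"
  define K where "K = I <+> (J <+> L)"
  define Z where "Z = S <+> T"
  have finK: "finite K" unfolding K_def using finI J L by simp
  have finZ: "finite Z" unfolding Z_def using fin finT by simp
  have cK: "card K = card I + card J + card L" unfolding K_def using finI J L by (simp add: card_Plus)
  have cZ: "card Z = n + card T" unfolding Z_def using fin finT nS by (simp add: card_Plus)
  obtain c where c: "\<exists>k\<in>K. c k \<noteq> 0" and cz: "\<forall>z\<in>Z. (\<Sum>k\<in>K. c k * w k z) = 0"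
    using dep[OF finZ finK, of w] cK cZ card by auto
  define \<alpha> where "\<alpha> = (\<lambda>i. c (Inl i))"
  define \<beta> where "\<beta> = (\<lambda>a. c (Inr (Inl a)))"
  define \<gamma> where "\<gamma> = (\<lambda>l. c (Inr (Inr l)))"
  have sumK: "(\<Sum>k\<in>K. c k * w k z) = (\<Sum>i\<in>I. c (Inl i) * w (Inl i) z) +
      ((\<Sum>a\<in>J. c (Inr (Inl a)) * w (Inr (Inl a)) z) + (\<Sum>l\<in>L. c (Inr (Inr l)) * w (Inr (Inr l)) z))" for z
    unfolding K_def using finI J L by (simp add: sum.Plus)
  have eqS: "(\<Sum>i\<in>J. \<beta> i * u i s) = (\<Sum>i\<in>I. \<alpha> i * vec i s)" if s: "s \<in> S" for s
  proof -
    have "Inl s \<in> Z" unfolding Z_def using s by (rule InlI)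
    then have "(\<Sum>k\<in>K. c k * w k (Inl s)) = 0" using cz by blast
    then show ?thesis unfolding sumK by (simp add: w_def \<alpha>_def \<beta>_def sum_negf)
  qed
  have eqT: "(\<Sum>i\<in>J. \<beta> i * u i s) = (\<Sum>l\<in>L. \<gamma> l * d l s)" if s: "s \<in> T" for s
  proof -
    have "Inr s \<in> Z" unfolding Z_def using s by (rule InrI)
    then have "(\<Sum>k\<in>K. c k * w k (Inr s)) = 0" using cz by blast
    then show ?thesis unfolding sumK by (simp add: w_def \<gamma>_def \<beta>_def sum_negf)
  qed
  have nz: "\<exists>s\<in>T. (\<Sum>i\<in>J. \<beta> i * u i s) \<noteq> 0"
  proof (rule ccontr)
    assume "\<not> ?thesis"
    then have z: "\<forall>s\<in>T. (\<Sum>i\<in>J. \<beta> i * u i s) = 0" by blast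
    then have b0: "\<forall>a\<in>J. \<beta> a = 0" using uind by blast
    have "\<forall>s\<in>T. (\<Sum>l\<in>L. \<gamma> l * d l s) = 0" using z eqT by simp
    then have g0: "\<forall>l\<in>L. \<gamma> l = 0" using dind by blast
    have y0: "(\<Sum>i\<in>I. \<alpha> i * vec i s) = 0" if "s \<in> S" for s
      using eqS[OF that] b0 by simp
    have a0: "\<alpha> k = 0" if k: "k \<in> I" for k
    proof -
      have kn: "k < n" using k I by auto
      have "fdot S (vec k) (\<lambda>s. \<Sum>i\<in>I. \<alpha> i * vec i s) = \<alpha> k"
        using fdot_comb[OF orth I kn, of \<alpha>] k by simp
      moreover have "fdot S (vec k) (\<lambda>s. \<Sum>i\<in>I. \<alpha> i * vec i s) = 0"
        unfolding fdot_def using y0 by simp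
      ultimately show ?thesis by simp
    qed
    have "\<forall>k\<in>K. c k = 0"
      unfolding K_def using a0 b0 g0 by (auto simp: \<alpha>_def \<beta>_def \<gamma>_def)
    then show False using c by blast
  qed
  show ?thesis using eqS eqT nz by blast
qed

lemma qf_cong: "(\<And>s. s \<in> S \<Longrightarrow> x s = y s) \<Longrightarrow> qf S M x = qf S M y"
  unfolding qf_def by (rule sum.cong, simp, rule sum.cong, auto)

lemma fdot_cong: "(\<And>s. s \<in> S \<Longrightarrow> x s = y s) \<Longrightarrow> fdot S x x = fdot S y y"
  unfolding fdot_def by (rule sum.cong) auto

lemma key_gen:
  fixes M :: "'a \<Rightarrow> 'a \<Rightarrow> real" and u :: "'j \<Rightarrow> 'a \<Rightarrow> real" and d :: "'l \<Rightarrow> 'a \<Rightarrow> real"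
  assumes fin: "finite S" and sym: "\<And>a b. a \<in> S \<Longrightarrow> b \<in> S \<Longrightarrow> M a b = M b a"
    and I: "I \<subseteq> {..<card S}"
    and T: "T \<subseteq> S" and J: "finite J" and L: "finite L"
    and uind: "\<And>\<beta>. (\<forall>s\<in>T. (\<Sum>i\<in>J. \<beta> i * u i s) = 0) \<Longrightarrow> (\<forall>i\<in>J. \<beta> i = 0)"
    and dind: "\<And>\<gamma>. (\<forall>s\<in>T. (\<Sum>l\<in>L. \<gamma> l * d l s) = 0) \<Longrightarrow> (\<forall>l\<in>L. \<gamma> l = 0)"
    and card: "card S + card T < card I + card J + card L"
  shows "\<exists>\<beta> \<gamma> \<alpha>. (\<forall>s\<in>T. (\<Sum>i\<in>J. \<beta> i * u i s) = (\<Sum>l\<in>L. \<gamma> l * d l s)) \<and>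
     fdot S (\<lambda>s. \<Sum>i\<in>J. \<beta> i * u i s) (\<lambda>s. \<Sum>i\<in>J. \<beta> i * u i s) = (\<Sum>i\<in>I. (\<alpha> i)\<^sup>2) \<and>
     qf S M (\<lambda>s. \<Sum>i\<in>J. \<beta> i * u i s) = (\<Sum>i\<in>I. (\<alpha> i)\<^sup>2 * eigenvalues S M ! i) \<and>
     fdot S (\<lambda>s. \<Sum>i\<in>J. \<beta> i * u i s) (\<lambda>s. \<Sum>i\<in>J. \<beta> i * u i s) > 0"
proof -
  define n where "n = card S"
  obtain vec where orth: "\<forall>i<n. \<forall>j<n. fdot S (vec i) (vec j) = (if i = j then 1 else 0)"
    and eig: "\<forall>i<n. \<forall>a\<in>S. (\<Sum>b\<in>S. M a b * vec i b) = eigenvalues S M ! i * vec i a"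
    using spectral_fun[of S M, OF fin sym] unfolding n_def by blast
  have I': "I \<subseteq> {..<n}" using I n_def by simp
  have cc': "n + card T < card I + card J + card L" using card n_def by simp
  obtain \<alpha> \<beta> \<gamma> where eqS: "\<forall>s\<in>S. (\<Sum>i\<in>J. \<beta> i * u i s) = (\<Sum>i\<in>I. \<alpha> i * vec i s)"
    and eqT: "\<forall>s\<in>T. (\<Sum>i\<in>J. \<beta> i * u i s) = (\<Sum>l\<in>L. \<gamma> l * d l s)"
    and nz: "\<exists>s\<in>T. (\<Sum>i\<in>J. \<beta> i * u i s) \<noteq> 0"
    using core[where S=S and n=n and vec=vec and I=I and T=T and J=J and L=L and u=u and d=d,
        OF fin n_def[symmetric] orth I' T J L uind dind cc'] by blast
  let ?x = "\<lambda>s. \<Sum>i\<in>J. \<beta> i * u i s"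
  let ?y = "\<lambda>s. \<Sum>i\<in>I. \<alpha> i * vec i s"
  have "fdot S ?x ?x = fdot S ?y ?y" by (rule fdot_cong) (use eqS in auto)
  also have "\<dots> = (\<Sum>i\<in>I. (\<alpha> i)\<^sup>2)" by (rule expand(2)[OF fin orth eig I'])
  finally have f: "fdot S ?x ?x = (\<Sum>i\<in>I. (\<alpha> i)\<^sup>2)" .
  have "qf S M ?x = qf S M ?y" by (rule qf_cong) (use eqS in auto)
  also have "\<dots> = (\<Sum>i\<in>I. (\<alpha> i)\<^sup>2 * eigenvalues S M ! i)" by (rule expand(3)[OF fin orth eig I'])
  finally have q: "qf S M ?x = (\<Sum>i\<in>I. (\<alpha> i)\<^sup>2 * eigenvalues S M ! i)" .
  from nz obtain s where s: "s \<in> T" "?x s \<noteq> 0" by blast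
  have sS: "s \<in> S" using s T by auto
  have pos: "fdot S ?x ?x > 0" by (rule fdot_pos[where x="?x", OF fin sS s(2)])
  show ?thesis using eqT f q pos by blast
qed

lemma key_up:
  fixes M :: "'a \<Rightarrow> 'a \<Rightarrow> real" and u :: "'j \<Rightarrow> 'a \<Rightarrow> real" and d :: "'l \<Rightarrow> 'a \<Rightarrow> real"
  assumes fin: "finite S" and sym: "\<And>a b. a \<in> S \<Longrightarrow> b \<in> S \<Longrightarrow> M a b = M b a"
    and j: "1 \<le> j" "j \<le> card S"
    and T: "T \<subseteq> S" and J: "finite J" and L: "finite L"
    and uind: "\<And>\<beta>. (\<forall>s\<in>T. (\<Sum>i\<in>J. \<beta> i * u i s) = 0) \<Longrightarrow> (\<forall>i\<in>J. \<beta> i = 0)"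
    and dind: "\<And>\<gamma>. (\<forall>s\<in>T. (\<Sum>l\<in>L. \<gamma> l * d l s) = 0) \<Longrightarrow> (\<forall>l\<in>L. \<gamma> l = 0)"
    and card: "card T + j \<le> card J + card L"
    and bound: "\<And>\<beta> \<gamma>. (\<forall>s\<in>T. (\<Sum>i\<in>J. \<beta> i * u i s) = (\<Sum>l\<in>L. \<gamma> l * d l s)) \<Longrightarrow>
       qf S M (\<lambda>s. \<Sum>i\<in>J. \<beta> i * u i s) \<le> c * fdot S (\<lambda>s. \<Sum>i\<in>J. \<beta> i * u i s) (\<lambda>s. \<Sum>i\<in>J. \<beta> i * u i s)"
  shows "eigenvalues S M ! (j - 1) \<le> c"
proof -
  define n where "n = card S"
  define I where "I = {j - 1..<n}"
  have I: "I \<subseteq> {..<card S}" unfolding I_def n_def by auto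
  have cI: "card I = n - j + 1" unfolding I_def using j n_def by simp
  have cc: "card S + card T < card I + card J + card L" using cI card j n_def by linarith
  obtain \<beta> \<gamma> \<alpha> where eqT: "\<forall>s\<in>T. (\<Sum>i\<in>J. \<beta> i * u i s) = (\<Sum>l\<in>L. \<gamma> l * d l s)"
    and f: "fdot S (\<lambda>s. \<Sum>i\<in>J. \<beta> i * u i s) (\<lambda>s. \<Sum>i\<in>J. \<beta> i * u i s) = (\<Sum>i\<in>I. (\<alpha> i)\<^sup>2)"
    and q: "qf S M (\<lambda>s. \<Sum>i\<in>J. \<beta> i * u i s) = (\<Sum>i\<in>I. (\<alpha> i)\<^sup>2 * eigenvalues S M ! i)"
    and pos: "fdot S (\<lambda>s. \<Sum>i\<in>J. \<beta> i * u i s) (\<lambda>s. \<Sum>i\<in>J. \<beta> i * u i s) > 0"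
    using key_gen[of S M I T J L u d, OF fin sym I T J L uind dind cc] by blast
  let ?xs = "eigenvalues S M"
  have len: "length ?xs = n" and so: "sorted ?xs" using spectral_fun[of S M, OF fin sym] n_def by auto
  have "(\<Sum>i\<in>I. (\<alpha> i)\<^sup>2 * ?xs ! (j - 1)) \<le> (\<Sum>i\<in>I. (\<alpha> i)\<^sup>2 * ?xs ! i)"
  proof (rule sum_mono)
    fix i assume "i \<in> I"
    then have "j - 1 \<le> i" "i < length ?xs" unfolding I_def using len by auto
    then have "?xs ! (j - 1) \<le> ?xs ! i" using so by (simp add: sorted_nth_mono)
    then show "(\<alpha> i)\<^sup>2 * ?xs ! (j - 1) \<le> (\<alpha> i)\<^sup>2 * ?xs ! i" by (simp add: mult_left_mono)
  qed
  moreover have "(\<Sum>i\<in>I. (\<alpha> i)\<^sup>2 * ?xs ! (j - 1)) = ?xs ! (j - 1) * (\<Sum>i\<in>I. (\<alpha> i)\<^sup>2)"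
    by (simp add: sum_distrib_left mult.commute)
  ultimately have "?xs ! (j - 1) * (\<Sum>i\<in>I. (\<alpha> i)\<^sup>2) \<le> c * (\<Sum>i\<in>I. (\<alpha> i)\<^sup>2)"
    using bound[OF eqT] unfolding f q by linarith
  moreover have "0 < (\<Sum>i\<in>I. (\<alpha> i)\<^sup>2)" using pos unfolding f .
  ultimately show ?thesis by (rule mult_right_le_imp_le)
qed

lemma key_low:
  fixes M :: "'a \<Rightarrow> 'a \<Rightarrow> real" and u :: "'j \<Rightarrow> 'a \<Rightarrow> real" and d :: "'l \<Rightarrow> 'a \<Rightarrow> real"
  assumes fin: "finite S" and sym: "\<And>a b. a \<in> S \<Longrightarrow> b \<in> S \<Longrightarrow> M a b = M b a"
    and j: "1 \<le> j" "j \<le> card S"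
    and T: "T \<subseteq> S" and J: "finite J" and L: "finite L"
    and uind: "\<And>\<beta>. (\<forall>s\<in>T. (\<Sum>i\<in>J. \<beta> i * u i s) = 0) \<Longrightarrow> (\<forall>i\<in>J. \<beta> i = 0)"
    and dind: "\<And>\<gamma>. (\<forall>s\<in>T. (\<Sum>l\<in>L. \<gamma> l * d l s) = 0) \<Longrightarrow> (\<forall>l\<in>L. \<gamma> l = 0)"
    and card: "card T + j \<le> card J + card L"
    and bound: "\<And>\<beta> \<gamma>. (\<forall>s\<in>T. (\<Sum>i\<in>J. \<beta> i * u i s) = (\<Sum>l\<in>L. \<gamma> l * d l s)) \<Longrightarrow>
       c * fdot S (\<lambda>s. \<Sum>i\<in>J. \<beta> i * u i s) (\<lambda>s. \<Sum>i\<in>J. \<beta> i * u i s) \<le> qf S M (\<lambda>s. \<Sum>i\<in>J. \<beta> i * u i s)"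
  shows "c \<le> eigenvalues S M ! (card S - j)"
proof -
  define n where "n = card S"
  define I where "I = {..<n - j + 1}"
  have I: "I \<subseteq> {..<card S}" unfolding I_def n_def using j by auto
  have cI: "card I = n - j + 1" unfolding I_def by simp
  have cc: "card S + card T < card I + card J + card L" using cI card j n_def by linarith
  obtain \<beta> \<gamma> \<alpha> where eqT: "\<forall>s\<in>T. (\<Sum>i\<in>J. \<beta> i * u i s) = (\<Sum>l\<in>L. \<gamma> l * d l s)"
    and f: "fdot S (\<lambda>s. \<Sum>i\<in>J. \<beta> i * u i s) (\<lambda>s. \<Sum>i\<in>J. \<beta> i * u i s) = (\<Sum>i\<in>I. (\<alpha> i)\<^sup>2)"
    and q: "qf S M (\<lambda>s. \<Sum>i\<in>J. \<beta> i * u i s) = (\<Sum>i\<in>I. (\<alpha> i)\<^sup>2 * eigenvalues S M ! i)"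
    and pos: "fdot S (\<lambda>s. \<Sum>i\<in>J. \<beta> i * u i s) (\<lambda>s. \<Sum>i\<in>J. \<beta> i * u i s) > 0"
    using key_gen[of S M I T J L u d, OF fin sym I T J L uind dind cc] by blast
  let ?xs = "eigenvalues S M"
  have len: "length ?xs = n" and so: "sorted ?xs" using spectral_fun[of S M, OF fin sym] n_def by auto
  have "(\<Sum>i\<in>I. (\<alpha> i)\<^sup>2 * ?xs ! i) \<le> (\<Sum>i\<in>I. (\<alpha> i)\<^sup>2 * ?xs ! (n - j))"
  proof (rule sum_mono)
    fix i assume "i \<in> I"
    then have "i \<le> n - j" "n - j < length ?xs" unfolding I_def using len j n_def by auto
    then have "?xs ! i \<le> ?xs ! (n - j)" using so by (simp add: sorted_nth_mono)
    then show "(\<alpha> i)\<^sup>2 * ?xs ! i \<le> (\<alpha> i)\<^sup>2 * ?xs ! (n - j)" by (simp add: mult_left_mono)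
  qed
  moreover have "(\<Sum>i\<in>I. (\<alpha> i)\<^sup>2 * ?xs ! (n - j)) = ?xs ! (n - j) * (\<Sum>i\<in>I. (\<alpha> i)\<^sup>2)"
    by (simp add: sum_distrib_left mult.commute)
  ultimately have "c * (\<Sum>i\<in>I. (\<alpha> i)\<^sup>2) \<le> ?xs ! (n - j) * (\<Sum>i\<in>I. (\<alpha> i)\<^sup>2)"
    using bound[OF eqT] unfolding f q by linarith
  moreover have "0 < (\<Sum>i\<in>I. (\<alpha> i)\<^sup>2)" using pos unfolding f .
  ultimately show ?thesis unfolding n_def by (rule mult_right_le_imp_le)
qed

definition sideP :: "nat \<Rightarrow> nat \<times> nat \<Rightarrow> nat \<Rightarrow> bool" where
  "sideP k c a = (if a = 0 then snd c = 0 else if a = 1 then fst c = k - 1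
     else if a = 2 then snd c = k - 1 else fst c = 0)"

definition pos :: "nat \<Rightarrow> nat \<times> nat \<Rightarrow> nat \<Rightarrow> nat" where
  "pos k c a = (if a = 0 then fst c else if a = 1 then snd c
     else if a = 2 then k - 1 - fst c else k - 1 - snd c)"

definition nbr :: "nat \<times> nat \<Rightarrow> nat \<Rightarrow> nat \<times> nat" where
  "nbr c a = (if a = 0 then (fst c, snd c - 1) else if a = 1 then (fst c + 1, snd c)
     else if a = 2 then (fst c, snd c + 1) else (fst c - 1, snd c))"

definition nsides :: "nat \<Rightarrow> nat \<times> nat \<Rightarrow> nat" where
  "nsides k c = card {a\<in>{0..<4}. sideP k c a}"

lemma four_cases: "(a::nat) < 4 \<Longrightarrow> a = 0 \<or> a = 1 \<or> a = 2 \<or> a = 3" by auto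

lemma side_pos:
  assumes c: "c \<in> cluster_vertices k" and a: "a < 4" and s: "sideP k c a"
  shows "pos k c a < k" "c = boundary_cell k a (pos k c a)"
  using c four_cases[OF a] s
  by (cases c; auto simp: cluster_vertices_def boundary_cell_def sideP_def pos_def)+

lemma side_iff:
  assumes c: "c \<in> cluster_vertices k" and a: "a < 4"
  shows "(\<exists>t<k. c = boundary_cell k a t) \<longleftrightarrow> sideP k c a"
proof
  assume "\<exists>t<k. c = boundary_cell k a t"
  then show "sideP k c a" using c four_cases[OF a]
    by (cases c) (auto simp: cluster_vertices_def boundary_cell_def sideP_def)
next
  assume "sideP k c a"
  then show "\<exists>t<k. c = boundary_cell k a t" using side_pos[OF c a] by blast
qed

lemma pos_unique:
  assumes c: "c \<in> cluster_vertices k" and a: "a < 4" and t: "t < k" and ct: "c = boundary_cell k a t"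
  shows "t = pos k c a"
  using c four_cases[OF a] t ct
  by (cases c) (auto simp: cluster_vertices_def boundary_cell_def pos_def)

lemma bc_in:
  assumes "t < k" "a < 4"
  shows "boundary_cell k a t \<in> cluster_vertices k"
  using assms by (auto simp: cluster_vertices_def boundary_cell_def)

lemma nbr_in:
  assumes c: "c \<in> cluster_vertices k" and a: "a < 4" and s: "\<not> sideP k c a"
  shows "nbr c a \<in> cluster_vertices k"
  using c four_cases[OF a] s
  by (cases c) (auto simp: cluster_vertices_def nbr_def sideP_def)

lemma nbr_adj:
  assumes c: "c \<in> cluster_vertices k" and a: "a < 4" and s: "\<not> sideP k c a"
  shows "grid_adj c (nbr c a)"
  using c four_cases[OF a] s
  by (cases c) (auto simp: cluster_vertices_def nbr_def sideP_def grid_adj_def)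

lemma adj_nbr:
  assumes c: "c \<in> cluster_vertices k" and d: "d \<in> cluster_vertices k" and adj: "grid_adj c d"
  shows "\<exists>a<4. \<not> sideP k c a \<and> d = nbr c a"
proof -
  obtain x y where cxy: "c = (x, y)" by (cases c)
  obtain x' y' where dxy: "d = (x', y')" by (cases d)
  have xy: "x < k" "y < k" "x' < k" "y' < k" using c d cxy dxy by (auto simp: cluster_vertices_def)
  consider "x' = x \<and> y = y' + 1" | "x' = x + 1 \<and> y' = y" | "x' = x \<and> y' = y + 1" | "x = x' + 1 \<and> y' = y"
    using adj cxy dxy by (auto simp: grid_adj_def)
  then show ?thesis
  proof cases
    case 1
    have "\<not> sideP k c 0" "d = nbr c 0" using 1 cxy dxy by (simp_all add: sideP_def nbr_def)
    then show ?thesis by (intro exI[of _ 0]) simp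
  next
    case 2
    have "\<not> sideP k c 1" "d = nbr c 1" using 2 cxy dxy xy by (simp_all add: sideP_def nbr_def)
    then show ?thesis by (intro exI[of _ 1]) simp
  next
    case 3
    have "\<not> sideP k c 2" "d = nbr c 2" using 3 cxy dxy xy by (simp_all add: sideP_def nbr_def)
    then show ?thesis by (intro exI[of _ 2]) simp
  next
    case 4
    have "\<not> sideP k c 3" "d = nbr c 3" using 4 cxy dxy xy by (simp_all add: sideP_def nbr_def)
    then show ?thesis by (intro exI[of _ 3]) simp
  qed
qed

lemma nbr_inj:
  assumes c: "c \<in> cluster_vertices k" and a: "a < 4" and b: "b < 4"
    and sa: "\<not> sideP k c a" and sb: "\<not> sideP k c b" and eq: "nbr c a = nbr c b"
  shows "a = b"
  using c four_cases[OF a] four_cases[OF b] sa sb eq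
  by (cases c) (auto simp: cluster_vertices_def nbr_def sideP_def)

lemma grid_nbrs:
  assumes c: "c \<in> cluster_vertices k"
  shows "{d \<in> cluster_vertices k. grid_adj c d} = nbr c ` {a\<in>{0..<4}. \<not> sideP k c a}"
proof
  show "{d \<in> cluster_vertices k. grid_adj c d} \<subseteq> nbr c ` {a\<in>{0..<4}. \<not> sideP k c a}"
  proof
    fix d assume "d \<in> {d \<in> cluster_vertices k. grid_adj c d}"
    then obtain a where "a < 4" "\<not> sideP k c a" "d = nbr c a" using adj_nbr[OF c] by blast
    then show "d \<in> nbr c ` {a\<in>{0..<4}. \<not> sideP k c a}" by auto
  qed
  show "nbr c ` {a\<in>{0..<4}. \<not> sideP k c a} \<subseteq> {d \<in> cluster_vertices k. grid_adj c d}"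
    using nbr_in[OF c] nbr_adj[OF c] by auto
qed

lemma grid_deg:
  assumes c: "c \<in> cluster_vertices k"
  shows "card {d \<in> cluster_vertices k. grid_adj c d} + nsides k c = 4"
proof -
  have "card {d \<in> cluster_vertices k. grid_adj c d} = card {a\<in>{0..<4}. \<not> sideP k c a}"
    unfolding grid_nbrs[OF c] by (rule card_image) (use nbr_inj[OF c] in \<open>auto simp: inj_on_def\<close>)
  moreover have "card {a\<in>{0..<4::nat}. \<not> sideP k c a} + card {a\<in>{0..<4}. sideP k c a} = card {0..<4::nat}"
  proof -
    have "{a\<in>{0..<4::nat}. \<not> sideP k c a} \<union> {a\<in>{0..<4}. sideP k c a} = {0..<4}" by auto
    then show ?thesis by (subst card_Un_disjoint[symmetric]) auto
  qed
  ultimately show ?thesis unfolding nsides_def by simp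
qed

lemma nsides_sum: "nsides k c = (if snd c = 0 then 1 else 0) + (if fst c = k - 1 then 1 else 0)
   + (if snd c = k - 1 then 1 else 0) + (if fst c = 0 then 1 else 0)"
proof -
  have e: "{a\<in>{0..<4::nat}. sideP k c a} = {0..<4} \<inter> Collect (sideP k c)" by auto
  have "nsides k c = (\<Sum>a\<in>{0..<4}. if sideP k c a then 1 else 0)"
    unfolding nsides_def e by (simp add: sum.If_cases)
  also have "\<dots> = (if snd c = 0 then 1 else 0) + (if fst c = k - 1 then 1 else 0)
   + (if snd c = k - 1 then 1 else 0) + (if fst c = 0 then 1 else 0)"
  proof -
    have sum4: "(\<Sum>a\<in>{0..<4::nat}. f a) = f 0 + f 1 + f 2 + f 3" for f :: "nat \<Rightarrow> nat"
      by (simp add: eval_nat_numeral atLeast0_lessThan_Suc add_ac)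
    have s0: "sideP k c 0 = (snd c = 0)" and s1: "sideP k c 1 = (fst c = k - 1)"
      and s2: "sideP k c 2 = (snd c = k - 1)" and s3: "sideP k c 3 = (fst c = 0)"
      by (simp_all add: sideP_def)
    show ?thesis by (simp only: sum4 s0 s1 s2 s3)
  qed
  finally show ?thesis .
qed

locale gcx =
  fixes V :: "'v set" and E :: "'v \<Rightarrow> 'v \<Rightarrow> bool" and rot :: "'v \<Rightarrow> nat \<Rightarrow> 'v" and k :: nat
  assumes simple: "simple_graph V E" and orient: "orientation V E rot" and k1: "k \<ge> 1"
begin

lemma finV: "finite V" using simple by (simp add: simple_graph_def)
lemma Esym: "E p q \<Longrightarrow> E q p" using simple by (simp add: simple_graph_def)
lemma EV: "E p q \<Longrightarrow> p \<in> V \<and> q \<in> V \<and> p \<noteq> q" using simple by (simp add: simple_graph_def)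
lemma rot_bij: "p \<in> V \<Longrightarrow> bij_betw (rot p) {0..<4} {q \<in> V. E p q}"
  using orient by (simp add: orientation_def)
lemma rotE: "p \<in> V \<Longrightarrow> a < 4 \<Longrightarrow> E p (rot p a) \<and> rot p a \<in> V"
  using rot_bij[of p] by (auto simp: bij_betw_def)
lemma rot_inj: "p \<in> V \<Longrightarrow> a < 4 \<Longrightarrow> b < 4 \<Longrightarrow> rot p a = rot p b \<Longrightarrow> a = b"
  using rot_bij[of p] by (auto simp: bij_betw_def inj_on_def)
lemma rot_surj: "p \<in> V \<Longrightarrow> E p q \<Longrightarrow> \<exists>a<4. rot p a = q"
proof -
  assume p: "p \<in> V" and e: "E p q"
  have "q \<in> rot p ` {0..<4}" using rot_bij[OF p] EV[OF e] e by (auto simp: bij_betw_def)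
  then show ?thesis by auto
qed

definition bk :: "'v \<Rightarrow> nat \<Rightarrow> nat" where
  "bk p a = (THE b. b < 4 \<and> rot (rot p a) b = p)"

lemma bk_prop:
  assumes p: "p \<in> V" and a: "a < 4"
  shows "bk p a < 4 \<and> rot (rot p a) (bk p a) = p"
proof -
  let ?q = "rot p a"
  have q: "?q \<in> V" "E ?q p" using rotE[OF p a] Esym by auto
  obtain b where b: "b < 4" "rot ?q b = p" using rot_surj[OF q] by blast
  have "\<exists>!b. b < 4 \<and> rot ?q b = p"
  proof (rule ex1I[of _ b])
    show "b < 4 \<and> rot ?q b = p" using b by simp
    fix b' assume "b' < 4 \<and> rot ?q b' = p"
    then show "b' = b" using rot_inj[OF q(1), of b' b] b by simp
  qed
  then show ?thesis unfolding bk_def by (rule theI')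
qed

lemma bk_unique:
  assumes p: "p \<in> V" and a: "a < 4" and b: "b < 4" "rot (rot p a) b = p"
  shows "b = bk p a"
proof -
  have q: "rot p a \<in> V" using rotE[OF p a] by auto
  have bp: "bk p a < 4" "rot (rot p a) (bk p a) = p" using bk_prop[OF p a] by auto
  have "rot (rot p a) b = rot (rot p a) (bk p a)" using bp(2) b(2) by simp
  then show ?thesis using rot_inj[OF q b(1) bp(1)] by simp
qed

abbreviation "S \<equiv> gc_vertices V k"
abbreviation "CL \<equiv> cluster_vertices k"

definition ext :: "'v \<Rightarrow> nat \<times> nat \<Rightarrow> nat \<Rightarrow> 'v \<times> (nat \<times> nat)" where
  "ext p c a = (rot p a, boundary_cell k (bk p a) (k - 1 - pos k c a))"

definition nb :: "'v \<Rightarrow> nat \<times> nat \<Rightarrow> nat \<Rightarrow> 'v \<times> (nat \<times> nat)" where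
  "nb p c a = (if sideP k c a then ext p c a else (p, nbr c a))"

lemma nb_in_adj:
  assumes p: "p \<in> V" and c: "c \<in> CL" and a: "a < 4"
  shows "nb p c a \<in> S \<and> gc_adj E rot k (p, c) (nb p c a)"
proof (cases "sideP k c a")
  case True
  have ps: "pos k c a < k" "c = boundary_cell k a (pos k c a)" using side_pos[OF c a True] by auto
  have t': "k - 1 - pos k c a < k" using k1 by simp
  have bp: "bk p a < 4" "rot (rot p a) (bk p a) = p" using bk_prop[OF p a] by auto
  have "nb p c a \<in> S" unfolding nb_def ext_def gc_vertices_def using True rotE[OF p a] bc_in[OF t' bp(1)] by simp
  moreover have "gc_adj E rot k (p, c) (nb p c a)"
  proof -
    have "k - 1 - (k - 1 - pos k c a) = pos k c a" using ps(1) by simp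
    then have "\<exists>a'<4. \<exists>b<4. \<exists>t<k. rot p a' = rot p a \<and> rot (rot p a) b = p \<and>
          c = boundary_cell k a' t \<and> boundary_cell k (bk p a) (k - 1 - pos k c a) = boundary_cell k b (k - 1 - t)"
      using a bp ps by (intro exI[of _ a] exI[of _ "bk p a"] exI[of _ "pos k c a"]) auto
    then show ?thesis unfolding gc_adj_def nb_def ext_def using True rotE[OF p a] by simp
  qed
  ultimately show ?thesis by simp
next
  case False
  then show ?thesis unfolding nb_def gc_adj_def gc_vertices_def
    using p nbr_in[OF c a False] nbr_adj[OF c a False] by simp
qed

lemma adj_nb:
  assumes p: "p \<in> V" and c: "c \<in> CL" and w: "w \<in> S" and adj: "gc_adj E rot k (p, c) w"
  shows "\<exists>a<4. w = nb p c a"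
proof -
  obtain q d where wqd: "w = (q, d)" by (cases w)
  have d: "d \<in> CL" using w wqd by (simp add: gc_vertices_def)
  from adj consider "q = p \<and> grid_adj c d" | "E p q \<and> (\<exists>a<4. \<exists>b<4. \<exists>t<k. rot p a = q \<and> rot q b = p \<and>
          c = boundary_cell k a t \<and> d = boundary_cell k b (k - 1 - t))"
    unfolding gc_adj_def wqd fst_conv snd_conv by blast
  then show ?thesis
  proof cases
    case 1
    then obtain a where a: "a < 4" "\<not> sideP k c a" "d = nbr c a" using adj_nbr[OF c d] by blast
    then show ?thesis using 1 wqd by (intro exI[of _ a]) (simp add: nb_def)
  next
    case 2
    then obtain a b t where a: "a < 4" "b < 4" "t < k" "rot p a = q" "rot q b = p"
      "c = boundary_cell k a t" "d = boundary_cell k b (k - 1 - t)" by blast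
    have sd: "sideP k c a" using side_iff[OF c a(1)] a by blast
    have tp: "t = pos k c a" using pos_unique[OF c a(1) a(3) a(6)] .
    have bb: "b = bk p a" using bk_unique[OF p a(1) a(2)] a by simp
    have "nb p c a = (rot p a, boundary_cell k (bk p a) (k - 1 - pos k c a))" using sd by (simp add: nb_def ext_def)
    also have "\<dots> = (q, d)" by (simp only: tp[symmetric] bb[symmetric] a(4) a(7))
    finally show ?thesis using wqd a(1) by metis
  qed
qed

lemma nb_inj:
  assumes p: "p \<in> V" and c: "c \<in> CL"
  shows "inj_on (nb p c) {0..<4}"
proof (rule inj_onI)
  fix a b assume a: "a \<in> {0..<4::nat}" and b: "b \<in> {0..<4::nat}" and eq: "nb p c a = nb p c b"
  have a4: "a < 4" and b4: "b < 4" using a b by auto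
  have np: "rot p x \<noteq> p" if "x < 4" for x
  proof -
    have "E p (rot p x)" using rotE[OF p that] by simp
    then show ?thesis using EV[of p "rot p x"] by auto
  qed
  show "a = b"
  proof (cases "sideP k c a")
    case sa: True
    show ?thesis
    proof (cases "sideP k c b")
      case True
      then have "rot p a = rot p b" using sa eq by (simp add: nb_def ext_def)
      then show ?thesis using rot_inj[OF p a4 b4] by simp
    next
      case False
      then have "rot p a = p" using sa eq by (simp add: nb_def ext_def)
      then show ?thesis using np[OF a4] by simp
    qed
  next
    case sa: False
    show ?thesis
    proof (cases "sideP k c b")
      case True
      then have "rot p b = p" using sa eq by (simp add: nb_def ext_def)
      then show ?thesis using np[OF b4] by simp
    next
      case False
      then have "nbr c a = nbr c b" using sa eq by (simp add: nb_def)
      then show ?thesis using nbr_inj[OF c a4 b4 sa False] by simp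
    qed
  qed
qed

lemma gc_nbrs:
  assumes p: "p \<in> V" and c: "c \<in> CL"
  shows "{w \<in> S. gc_adj E rot k (p, c) w} = nb p c ` {0..<4}"
proof
  show "{w \<in> S. gc_adj E rot k (p, c) w} \<subseteq> nb p c ` {0..<4}"
  proof
    fix w assume "w \<in> {w \<in> S. gc_adj E rot k (p, c) w}"
    then obtain a where "a < 4" "w = nb p c a" using adj_nb[OF p c] by blast
    then show "w \<in> nb p c ` {0..<4}" by auto
  qed
  show "nb p c ` {0..<4} \<subseteq> {w \<in> S. gc_adj E rot k (p, c) w}"
    using nb_in_adj[OF p c] by auto
qed

lemma gc_deg:
  assumes p: "p \<in> V" and c: "c \<in> CL"
  shows "card {w \<in> S. gc_adj E rot k (p, c) w} = 4"
  unfolding gc_nbrs[OF p c] using card_image[OF nb_inj[OF p c]] by simp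

lemma gc_sym: "gc_adj E rot k x y \<Longrightarrow> gc_adj E rot k y x"
proof -
  assume adj: "gc_adj E rot k x y"
  have gs: "grid_adj c d \<Longrightarrow> grid_adj d c" for c d by (auto simp: grid_adj_def)
  from adj consider "fst x = fst y \<and> grid_adj (snd x) (snd y)" | "E (fst x) (fst y) \<and>
      (\<exists>a<4. \<exists>b<4. \<exists>t<k. rot (fst x) a = fst y \<and> rot (fst y) b = fst x \<and>
          snd x = boundary_cell k a t \<and> snd y = boundary_cell k b (k - 1 - t))"
    unfolding gc_adj_def by blast
  then show ?thesis
  proof cases
    case 1 then show ?thesis unfolding gc_adj_def using gs by auto
  next
    case 2
    then obtain a b t where abt: "a < 4" "b < 4" "t < k" "rot (fst x) a = fst y" "rot (fst y) b = fst x"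
      "snd x = boundary_cell k a t" "snd y = boundary_cell k b (k - 1 - t)" by blast
    have lt: "k - 1 - t < k" and e: "k - 1 - (k - 1 - t) = t" using abt(3) k1 by auto
    have "rot (fst y) b = fst x \<and> rot (fst x) a = fst y \<and>
          snd y = boundary_cell k b (k - 1 - t) \<and> snd x = boundary_cell k a (k - 1 - (k - 1 - t))"
      using abt e by simp
    then have "\<exists>a<4. \<exists>b'<4. \<exists>t'<k. rot (fst y) a = fst x \<and> rot (fst x) b' = fst y \<and>
          snd y = boundary_cell k a t' \<and> snd x = boundary_cell k b' (k - 1 - t')"
      using abt(1,2) lt by blast
    then show ?thesis unfolding gc_adj_def using 2 Esym by blast
  qed
qed

lemma gc_same: "p \<in> V \<Longrightarrow> gc_adj E rot k (p, c) (p, d) = grid_adj c d"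
  unfolding gc_adj_def using EV by auto

end

lemma card_CL: "card (cluster_vertices k) = k * k"
  by (simp add: cluster_vertices_def card_cartesian_product)

lemma finite_CL: "finite (cluster_vertices k)"
  by (simp add: cluster_vertices_def)

lemma delta_cases:
  assumes k: "k \<ge> 2"
  shows "delta k r = (if r \<le> (k-2)*(k-2) then 0 else if r \<le> k*k - 4 then 1 else 2)"
proof -
  have kk: "k * k \<ge> 4" using k mult_le_mono[OF k k] by simp
  obtain j where kj: "k = j + 2" using k by (metis add.commute le_Suc_ex)
  have e1: "int k ^ 2 - 4 * int k + 4 = int ((k-2)*(k-2))" unfolding kj
    by (simp add: power2_eq_square algebra_simps)
  have e2: "int k ^ 2 - 4 = int (k*k - 4)" using kk by (simp add: of_nat_diff power2_eq_square)
  show ?thesis by (simp only: delta_def e1 e2 of_nat_le_iff)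
qed

lemma delta_k1: "delta 1 r = (if r \<le> 1 then 0 else if int r \<le> - 3 then 1 else 2)"
  unfolding delta_def by simp

lemma nsides_bounds:
  assumes c: "c \<in> cluster_vertices k" and k: "k \<ge> 2"
  shows "nsides k c \<le> 2"
    and "fst c \<in> {1..<k-1} \<Longrightarrow> snd c \<in> {1..<k-1} \<Longrightarrow> nsides k c = 0"
    and "c \<notin> {(0,0),(0,k-1),(k-1,0),(k-1,k-1)} \<Longrightarrow> nsides k c \<le> 1"
    and "c \<notin> {1..<k-1} \<times> {1..<k-1} \<Longrightarrow> nsides k c \<ge> 1"
    and "c \<in> {(0,0),(0,k-1),(k-1,0),(k-1,k-1)} \<Longrightarrow> nsides k c = 2"
  using c k by (cases c; auto simp: nsides_sum cluster_vertices_def)+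

lemma cells_le:
  assumes k: "k \<ge> 2" and r: "r \<le> k * k"
  shows "\<exists>C \<subseteq> cluster_vertices k. card C = r \<and> (\<forall>c\<in>C. real (nsides k c) \<le> delta k r)"
proof -
  let ?CL = "cluster_vertices k"
  let ?Int = "{1..<k-1} \<times> {1..<k-1}"
  let ?Co = "{(0,0),(0,k-1),(k-1,0),(k-1,k-1)}"
  have IntCL: "?Int \<subseteq> ?CL" by (auto simp: cluster_vertices_def)
  have cInt: "card ?Int = (k-2)*(k-2)" by (simp add: card_cartesian_product numeral_2_eq_2)
  have CoCL: "?Co \<subseteq> ?CL" using k by (auto simp: cluster_vertices_def)
  have cCo: "card ?Co = 4" using k by simp
  have cNC: "card (?CL - ?Co) = k * k - 4" using CoCL cCo card_CL[of k]
    by (simp add: card_Diff_subset finite_subset[OF CoCL finite_CL])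
  show ?thesis
  proof (cases "r \<le> (k-2)*(k-2)")
    case True
    then obtain C where C: "C \<subseteq> ?Int" "card C = r" using obtain_subset_with_card_n[of r ?Int] cInt by auto
    have "\<forall>c\<in>C. real (nsides k c) \<le> delta k r"
    proof
      fix c assume "c \<in> C"
      then have "c \<in> ?CL" "fst c \<in> {1..<k-1}" "snd c \<in> {1..<k-1}" using C IntCL by auto
      then have "nsides k c = 0" using nsides_bounds(2)[OF _ k] by blast
      then show "real (nsides k c) \<le> delta k r" using delta_cases[OF k] True by simp
    qed
    then show ?thesis using C IntCL by blast
  next
    case False
    show ?thesis
    proof (cases "r \<le> k*k - 4")
      case True
      then obtain C where C: "C \<subseteq> ?CL - ?Co" "card C = r" using obtain_subset_with_card_n[of r "?CL - ?Co"] cNC by auto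
      have "\<forall>c\<in>C. real (nsides k c) \<le> delta k r"
      proof
        fix c assume "c \<in> C"
        then have "c \<in> ?CL" "c \<notin> ?Co" using C by auto
        then have "nsides k c \<le> 1" using nsides_bounds(3)[OF _ k] by blast
        then show "real (nsides k c) \<le> delta k r" using delta_cases[OF k] True False by simp
      qed
      then show ?thesis using C by blast
    next
      case False2: False
      obtain C where C: "C \<subseteq> ?CL" "card C = r" using obtain_subset_with_card_n[of r ?CL] card_CL[of k] r by auto
      have "\<forall>c\<in>C. real (nsides k c) \<le> delta k r"
      proof
        fix c assume "c \<in> C"
        then have "c \<in> ?CL" using C by auto
        then have "nsides k c \<le> 2" using nsides_bounds(1)[OF _ k] by blast
        then show "real (nsides k c) \<le> delta k r" using delta_cases[OF k] False False2 by simp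
      qed
      then show ?thesis using C by blast
    qed
  qed
qed

lemma cells_ge:
  assumes k: "k \<ge> 1" and r: "1 \<le> r" "r \<le> k * k"
  shows "\<exists>C \<subseteq> cluster_vertices k. card C = k * k - r + 1 \<and> (\<forall>c\<in>C. delta k r \<le> real (nsides k c))"
proof -
  let ?CL = "cluster_vertices k"
  show ?thesis
  proof (cases "delta k r = 0")
    case True
    have "k * k - r + 1 \<le> card ?CL" using r card_CL[of k] by simp
    then obtain C where C: "C \<subseteq> ?CL" "card C = k * k - r + 1"
      using obtain_subset_with_card_n[of "k * k - r + 1" ?CL] by auto
    then show ?thesis using True by auto
  next
    case False
    have k2: "k \<ge> 2"
    proof (rule ccontr)
      assume "\<not> k \<ge> 2" then have "k = 1" using k by simp
      then show False using False r delta_k1 by simp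
    qed
    let ?Int = "{1..<k-1} \<times> {1..<k-1}"
    let ?Co = "{(0,0),(0,k-1),(k-1,0),(k-1,k-1)}"
    have IntCL: "?Int \<subseteq> ?CL" by (auto simp: cluster_vertices_def)
    have cInt: "card ?Int = (k-2)*(k-2)" by (simp add: card_cartesian_product numeral_2_eq_2)
    have CoCL: "?Co \<subseteq> ?CL" using k2 by (auto simp: cluster_vertices_def)
    have cCo: "card ?Co = 4" using k2 by simp
    have cBd: "card (?CL - ?Int) = k * k - (k-2)*(k-2)" using IntCL cInt card_CL[of k]
      by (simp add: card_Diff_subset finite_subset[OF IntCL finite_CL])
    have rgt: "\<not> r \<le> (k-2)*(k-2)" using False delta_cases[OF k2] by (auto split: if_splits)
    show ?thesis
    proof (cases "r \<le> k*k - 4")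
      case True
      have hh: "(k-2)*(k-2) \<le> k*k" by (simp add: mult_le_mono)
      have "k * k - r + 1 \<le> card (?CL - ?Int)" unfolding cBd using rgt r hh by arith
      then obtain C where C: "C \<subseteq> ?CL - ?Int" "card C = k * k - r + 1"
        using obtain_subset_with_card_n[of "k * k - r + 1" "?CL - ?Int"] by auto
      have "\<forall>c\<in>C. delta k r \<le> real (nsides k c)"
      proof
        fix c assume "c \<in> C"
        then have "c \<in> ?CL" "c \<notin> ?Int" using C by auto
        then have "nsides k c \<ge> 1" using nsides_bounds(4)[OF _ k2] by blast
        then show "delta k r \<le> real (nsides k c)" using delta_cases[OF k2] True rgt by simp
      qed
      then show ?thesis using C by blast
    next
      case False2: False
      have "k * k - r + 1 \<le> card ?Co" using cCo False2 r by simp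
      then obtain C where C: "C \<subseteq> ?Co" "card C = k * k - r + 1"
        using obtain_subset_with_card_n[of "k * k - r + 1" ?Co] by auto
      have "\<forall>c\<in>C. delta k r \<le> real (nsides k c)"
      proof
        fix c assume "c \<in> C"
        then have "c \<in> ?CL" "c \<in> ?Co" using C CoCL by auto
        then have "nsides k c = 2" using nsides_bounds(5)[OF _ k2] by blast
        then show "delta k r \<le> real (nsides k c)" using delta_cases[OF k2] False2 rgt by simp
      qed
      then show ?thesis using C CoCL by blast
    qed
  qed
qed

lemma lap_sym: "(\<And>u v. adj u v \<Longrightarrow> adj v u) \<Longrightarrow> lap_matrix S adj a b = lap_matrix S adj b a"
proof -
  assume s: "\<And>u v. adj u v \<Longrightarrow> adj v u"
  have "adj a b = adj b a" using s by blast
  then show ?thesis unfolding lap_matrix_def by (cases "a = b") auto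
qed

lemma adjm_sym: "(\<And>u v. adj u v \<Longrightarrow> adj v u) \<Longrightarrow> adj_matrix S adj a b = adj_matrix S adj b a"
proof -
  assume s: "\<And>u v. adj u v \<Longrightarrow> adj v u"
  have "adj a b = adj b a" using s by blast
  then show ?thesis unfolding adj_matrix_def by simp
qed

lemma grid_sym: "grid_adj c d \<Longrightarrow> grid_adj d c" by (auto simp: grid_adj_def)

lemma sum_copy:
  assumes "finite V" "p \<in> V" "\<And>q c. q \<in> V \<Longrightarrow> c \<in> C \<Longrightarrow> q \<noteq> p \<Longrightarrow> f (q, c) = 0"
  shows "(\<Sum>w\<in>V \<times> C. f w) = (\<Sum>c\<in>C. f (p, c))"
proof -
  have "(\<Sum>w\<in>V \<times> C. f w) = (\<Sum>q\<in>V. \<Sum>c\<in>C. f (q, c))"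
    by (rule sum.cartesian_product')
  also have "\<dots> = (\<Sum>c\<in>C. f (p, c)) + (\<Sum>q\<in>V - {p}. \<Sum>c\<in>C. f (q, c))"
    using assms(1,2) by (simp add: sum.remove)
  also have "(\<Sum>q\<in>V - {p}. \<Sum>c\<in>C. f (q, c)) = 0"
    using assms(3) by (auto intro!: sum.neutral)
  finally show ?thesis by simp
qed

lemma diag_split:
  fixes z :: "'c \<Rightarrow> real"
  assumes "finite C"
  shows "(\<Sum>c\<in>C. \<Sum>d\<in>C. z c * (D c d + (if c = d then \<alpha> c else 0)) * z d) =
   (\<Sum>c\<in>C. \<Sum>d\<in>C. z c * D c d * z d) + (\<Sum>c\<in>C. \<alpha> c * (z c)\<^sup>2)"
proof -
  have "(\<Sum>c\<in>C. \<Sum>d\<in>C. z c * (D c d + (if c = d then \<alpha> c else 0)) * z d) =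
    (\<Sum>c\<in>C. (\<Sum>d\<in>C. z c * D c d * z d) + (\<Sum>d\<in>C. if d = c then z c * \<alpha> c * z d else 0))"
  proof (rule sum.cong[OF refl])
    fix c assume "c \<in> C"
    have pt: "z c * (D c d + (if c = d then \<alpha> c else 0)) * z d = z c * D c d * z d + (if d = c then z c * \<alpha> c * z d else 0)" for d
      by (cases "c = d") (simp_all add: distrib_left distrib_right)
    show "(\<Sum>d\<in>C. z c * (D c d + (if c = d then \<alpha> c else 0)) * z d) =
      (\<Sum>d\<in>C. z c * D c d * z d) + (\<Sum>d\<in>C. if d = c then z c * \<alpha> c * z d else 0)"
      unfolding pt by (rule sum.distrib)
  qed
  also have "\<dots> = (\<Sum>c\<in>C. (\<Sum>d\<in>C. z c * D c d * z d) + \<alpha> c * (z c)\<^sup>2)"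
    by (rule sum.cong) (use assms in \<open>auto simp: power2_eq_square\<close>)
  finally show ?thesis by (simp add: sum.distrib)
qed

context gcx
begin

abbreviation "LG \<equiv> lap_matrix S (gc_adj E rot k)"
abbreviation "Lg \<equiv> lap_matrix CL grid_adj"
abbreviation "Ag \<equiv> adj_matrix CL grid_adj"

lemma finS: "finite S" using finV by (simp add: gc_vertices_def cluster_vertices_def)

lemma LG_sym: "LG a b = LG b a" by (rule lap_sym) (rule gc_sym)
lemma Lg_sym: "Lg a b = Lg b a" by (rule lap_sym) (rule grid_sym)
lemma Ag_sym: "Ag a b = Ag b a" by (rule adjm_sym) (rule grid_sym)

lemma LG_copy:
  assumes p: "p \<in> V" and c: "c \<in> CL"
  shows "LG (p, c) (p, d) = (if c = d then 4 else 0) - (if grid_adj c d then 1 else 0)"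
  unfolding lap_matrix_def using gc_deg[OF p c] gc_same[OF p] by (cases "c = d") auto

lemma Lg_entry:
  assumes c: "c \<in> CL"
  shows "Lg c d = (if c = d then 4 - real (nsides k c) else 0) - (if grid_adj c d then 1 else 0)"
proof -
  have "card {d \<in> CL. grid_adj c d} = 4 - nsides k c" using grid_deg[OF c] by simp
  moreover have "nsides k c \<le> 4" using grid_deg[OF c] by simp
  ultimately show ?thesis unfolding lap_matrix_def by (cases "c = d") (auto simp: of_nat_diff)
qed

definition emb :: "'v \<Rightarrow> (nat \<times> nat \<Rightarrow> real) \<Rightarrow> 'v \<times> (nat \<times> nat) \<Rightarrow> real" where
  "emb p z = (\<lambda>(q, c). if q = p then z c else 0)"

lemma qf_copy:
  assumes p: "p \<in> V" and x: "\<And>q c. q \<in> V \<Longrightarrow> c \<in> CL \<Longrightarrow> q \<noteq> p \<Longrightarrow> x (q, c) = 0"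
  shows "qf S LG x = (\<Sum>c\<in>CL. \<Sum>d\<in>CL. x (p, c) * ((if c = d then 4 else 0) - (if grid_adj c d then 1 else 0)) * x (p, d))"
proof -
  have "qf S LG x = (\<Sum>a\<in>V \<times> CL. \<Sum>b\<in>V \<times> CL. x a * LG a b * x b)"
    unfolding qf_def gc_vertices_def ..
  also have "\<dots> = (\<Sum>c\<in>CL. \<Sum>b\<in>V \<times> CL. x (p, c) * LG (p, c) b * x b)"
    by (rule sum_copy[OF finV p]) (simp add: x)
  also have "\<dots> = (\<Sum>c\<in>CL. \<Sum>d\<in>CL. x (p, c) * LG (p, c) (p, d) * x (p, d))"
    by (rule sum.cong[OF refl], rule sum_copy[OF finV p]) (simp add: x)
  also have "\<dots> = (\<Sum>c\<in>CL. \<Sum>d\<in>CL. x (p, c) * ((if c = d then 4 else 0) - (if grid_adj c d then 1 else 0)) * x (p, d))"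
    by (rule sum.cong[OF refl], rule sum.cong[OF refl]) (simp add: LG_copy[OF p])
  finally show ?thesis .
qed

lemma fdot_copy:
  assumes p: "p \<in> V" and x: "\<And>q c. q \<in> V \<Longrightarrow> c \<in> CL \<Longrightarrow> q \<noteq> p \<Longrightarrow> x (q, c) = 0"
  shows "fdot S x x = fdot CL (\<lambda>c. x (p, c)) (\<lambda>c. x (p, c))"
  unfolding fdot_def gc_vertices_def by (rule sum_copy[OF finV p]) (simp add: x)

lemma qf_copy_A:
  assumes p: "p \<in> V" and x: "\<And>q c. q \<in> V \<Longrightarrow> c \<in> CL \<Longrightarrow> q \<noteq> p \<Longrightarrow> x (q, c) = 0"
  shows "qf S LG x = 4 * fdot CL (\<lambda>c. x (p, c)) (\<lambda>c. x (p, c)) - qf CL Ag (\<lambda>c. x (p, c))"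
proof -
  have "qf S LG x = (\<Sum>c\<in>CL. \<Sum>d\<in>CL. x (p, c) * ((if c = d then 4 else 0) - (if grid_adj c d then 1 else 0)) * x (p, d))"
    by (rule qf_copy) (use p x in auto)
  also have "\<dots> = (\<Sum>c\<in>CL. \<Sum>d\<in>CL. x (p, c) * (- Ag c d + (if c = d then 4 else 0)) * x (p, d))"
    by (rule sum.cong[OF refl], rule sum.cong[OF refl]) (simp add: adj_matrix_def)
  also have "\<dots> = qf CL (\<lambda>c d. - Ag c d) (\<lambda>c. x (p, c)) + 4 * fdot CL (\<lambda>c. x (p, c)) (\<lambda>c. x (p, c))"
    unfolding diag_split[OF finite_CL] qf_def fdot_def by (simp add: sum_distrib_left power2_eq_square)
  also have "qf CL (\<lambda>c d. - Ag c d) (\<lambda>c. x (p, c)) = - qf CL Ag (\<lambda>c. x (p, c))"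
    unfolding qf_def by (simp add: sum_negf)
  finally show ?thesis by simp
qed

lemma qf_copy_L:
  assumes p: "p \<in> V" and x: "\<And>q c. q \<in> V \<Longrightarrow> c \<in> CL \<Longrightarrow> q \<noteq> p \<Longrightarrow> x (q, c) = 0"
  shows "qf S LG x = qf CL Lg (\<lambda>c. x (p, c)) + (\<Sum>c\<in>CL. real (nsides k c) * (x (p, c))\<^sup>2)"
proof -
  have "qf S LG x = (\<Sum>c\<in>CL. \<Sum>d\<in>CL. x (p, c) * ((if c = d then 4 else 0) - (if grid_adj c d then 1 else 0)) * x (p, d))"
    by (rule qf_copy) (use p x in auto)
  also have "\<dots> = (\<Sum>c\<in>CL. \<Sum>d\<in>CL. x (p, c) * (Lg c d + (if c = d then real (nsides k c) else 0)) * x (p, d))"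
    by (rule sum.cong[OF refl], rule sum.cong[OF refl]) (simp add: Lg_entry)
  also have "\<dots> = qf CL Lg (\<lambda>c. x (p, c)) + (\<Sum>c\<in>CL. real (nsides k c) * (x (p, c))\<^sup>2)"
    unfolding diag_split[OF finite_CL] qf_def ..
  finally show ?thesis .
qed

end

lemma sorted_wsum_ge:
  fixes xs :: "real list" and \<beta> :: "nat \<Rightarrow> real"
  assumes so: "sorted xs" and J: "\<forall>i\<in>J. a \<le> i \<and> i < length xs"
  shows "xs ! a * (\<Sum>i\<in>J. (\<beta> i)\<^sup>2) \<le> (\<Sum>i\<in>J. (\<beta> i)\<^sup>2 * xs ! i)"
proof -
  have "xs ! a * (\<Sum>i\<in>J. (\<beta> i)\<^sup>2) = (\<Sum>i\<in>J. (\<beta> i)\<^sup>2 * xs ! a)"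
    by (simp add: sum_distrib_left mult.commute)
  also have "\<dots> \<le> (\<Sum>i\<in>J. (\<beta> i)\<^sup>2 * xs ! i)"
  proof (rule sum_mono)
    fix i assume "i \<in> J"
    then have "xs ! a \<le> xs ! i" using J so by (simp add: sorted_nth_mono)
    then show "(\<beta> i)\<^sup>2 * xs ! a \<le> (\<beta> i)\<^sup>2 * xs ! i" by (simp add: mult_left_mono)
  qed
  finally show ?thesis .
qed

lemma sorted_wsum_le:
  fixes xs :: "real list" and \<beta> :: "nat \<Rightarrow> real"
  assumes so: "sorted xs" and J: "\<forall>i\<in>J. i \<le> a \<and> a < length xs"
  shows "(\<Sum>i\<in>J. (\<beta> i)\<^sup>2 * xs ! i) \<le> xs ! a * (\<Sum>i\<in>J. (\<beta> i)\<^sup>2)"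
proof -
  have "(\<Sum>i\<in>J. (\<beta> i)\<^sup>2 * xs ! i) \<le> (\<Sum>i\<in>J. (\<beta> i)\<^sup>2 * xs ! a)"
  proof (rule sum_mono)
    fix i assume "i \<in> J"
    then have "xs ! i \<le> xs ! a" using J so by (simp add: sorted_nth_mono)
    then show "(\<beta> i)\<^sup>2 * xs ! i \<le> (\<beta> i)\<^sup>2 * xs ! a" by (simp add: mult_left_mono)
  qed
  also have "\<dots> = xs ! a * (\<Sum>i\<in>J. (\<beta> i)\<^sup>2)"
    by (simp add: sum_distrib_left mult.commute)
  finally show ?thesis .
qed

context gcx
begin

lemma emb_vals:
  "(\<Sum>i\<in>J. \<beta> i * emb p (ww i) (q, c)) = (if q = p then (\<Sum>i\<in>J. \<beta> i * ww i c) else 0)"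
  unfolding emb_def by simp

lemma uind_emb:
  fixes ww :: "nat \<Rightarrow> nat \<times> nat \<Rightarrow> real"
  assumes orth: "\<forall>i<card CL. \<forall>j<card CL. fdot CL (ww i) (ww j) = (if i = j then 1 else 0)"
    and J: "J \<subseteq> {..<card CL}"
    and z: "\<forall>s\<in>{p} \<times> CL. (\<Sum>i\<in>J. \<beta> i * emb p (ww i) s) = 0"
  shows "\<forall>i\<in>J. \<beta> i = 0"
proof
  fix i assume i: "i \<in> J"
  have y0: "(\<Sum>i\<in>J. \<beta> i * ww i c) = 0" if "c \<in> CL" for c
  proof -
    have "(\<Sum>i\<in>J. \<beta> i * emb p (ww i) (p, c)) = 0" using z that by auto
    then show ?thesis by (simp add: emb_vals)
  qed
  have "fdot CL (ww i) (\<lambda>c. \<Sum>i\<in>J. \<beta> i * ww i c) = \<beta> i"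
    using fdot_comb[where \<alpha>=\<beta>, OF orth J] i J by auto
  moreover have "fdot CL (ww i) (\<lambda>c. \<Sum>i\<in>J. \<beta> i * ww i c) = 0"
    unfolding fdot_def using y0 by simp
  ultimately show "\<beta> i = 0" by simp
qed

lemma dind_ind:
  assumes L: "L \<subseteq> T" and fL: "finite L"
    and z: "\<forall>s\<in>T. (\<Sum>l\<in>L. \<gamma> l * (if s = l then 1 else 0)) = (0::real)"
  shows "\<forall>l\<in>L. \<gamma> l = 0"
proof
  fix l assume l: "l \<in> L"
  have "(\<Sum>l'\<in>L. \<gamma> l' * (if l = l' then 1 else 0)) = \<gamma> l"
    using fL l by (simp add: if_distrib cong: if_cong)
  then show "\<gamma> l = 0" using z l L by auto
qed

lemma copy_forms:
  fixes ww :: "nat \<Rightarrow> nat \<times> nat \<Rightarrow> real"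
  assumes p: "p \<in> V"
    and orth: "\<forall>i<card CL. \<forall>j<card CL. fdot CL (ww i) (ww j) = (if i = j then 1 else 0)"
    and eig: "\<forall>i<card CL. \<forall>a\<in>CL. (\<Sum>b\<in>CL. Mg a b * ww i b) = ev ! i * ww i a"
    and J: "J \<subseteq> {..<card CL}"
  shows "fdot S (\<lambda>s. \<Sum>i\<in>J. \<beta> i * emb p (ww i) s) (\<lambda>s. \<Sum>i\<in>J. \<beta> i * emb p (ww i) s) = (\<Sum>i\<in>J. (\<beta> i)\<^sup>2)"
    and "qf CL Mg (\<lambda>c. \<Sum>i\<in>J. \<beta> i * ww i c) = (\<Sum>i\<in>J. (\<beta> i)\<^sup>2 * ev ! i)"
    and "\<And>q c. q \<in> V \<Longrightarrow> c \<in> CL \<Longrightarrow> q \<noteq> p \<Longrightarrow> (\<Sum>i\<in>J. \<beta> i * emb p (ww i) (q, c)) = 0"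
    and "\<And>c. (\<Sum>i\<in>J. \<beta> i * emb p (ww i) (p, c)) = (\<Sum>i\<in>J. \<beta> i * ww i c)"
proof -
  show x0: "\<And>q c. q \<in> V \<Longrightarrow> c \<in> CL \<Longrightarrow> q \<noteq> p \<Longrightarrow> (\<Sum>i\<in>J. \<beta> i * emb p (ww i) (q, c)) = 0"
    by (simp add: emb_vals)
  show xp: "\<And>c. (\<Sum>i\<in>J. \<beta> i * emb p (ww i) (p, c)) = (\<Sum>i\<in>J. \<beta> i * ww i c)"
    by (simp add: emb_vals)
  have "fdot S (\<lambda>s. \<Sum>i\<in>J. \<beta> i * emb p (ww i) s) (\<lambda>s. \<Sum>i\<in>J. \<beta> i * emb p (ww i) s)
      = fdot CL (\<lambda>c. \<Sum>i\<in>J. \<beta> i * ww i c) (\<lambda>c. \<Sum>i\<in>J. \<beta> i * ww i c)"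
    using fdot_copy[of p "\<lambda>s. \<Sum>i\<in>J. \<beta> i * emb p (ww i) s", OF p] x0 xp by simp
  also have "\<dots> = (\<Sum>i\<in>J. (\<beta> i)\<^sup>2)"
    by (rule expand(2)[OF finite_CL orth eig J])
  finally show "fdot S (\<lambda>s. \<Sum>i\<in>J. \<beta> i * emb p (ww i) s) (\<lambda>s. \<Sum>i\<in>J. \<beta> i * emb p (ww i) s) = (\<Sum>i\<in>J. (\<beta> i)\<^sup>2)" .
  show "qf CL Mg (\<lambda>c. \<Sum>i\<in>J. \<beta> i * ww i c) = (\<Sum>i\<in>J. (\<beta> i)\<^sup>2 * ev ! i)"
    by (rule expand(3)[OF finite_CL orth eig J])
qed

end

context gcx
begin

lemma basic_T:
  assumes p: "p \<in> V"
  shows "{p} \<times> CL \<subseteq> S" "card ({p} \<times> CL) = card CL" "card CL \<le> card S" "finite ({p} \<times> CL)"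
proof -
  show T: "{p} \<times> CL \<subseteq> S" using p by (auto simp: gc_vertices_def)
  show "card ({p} \<times> CL) = card CL" by (simp add: card_cartesian_product)
  then show "card CL \<le> card S" using card_mono[OF finS T] by simp
  show "finite ({p} \<times> CL)" using finite_CL by simp
qed

lemma claim1a:
  assumes p: "p \<in> V" and j: "1 \<le> j" "j \<le> card CL"
  shows "eigenvalues S LG ! (j - 1) \<le> 4 - eigenvalues CL Ag ! (card CL - j)"
proof -
  define m where "m = card CL"
  define nu where "nu = eigenvalues CL Ag"
  have symA: "\<And>a b. a \<in> CL \<Longrightarrow> b \<in> CL \<Longrightarrow> Ag a b = Ag b a" using Ag_sym by blast
  obtain ww where orth: "\<forall>i<card CL. \<forall>j<card CL. fdot CL (ww i) (ww j) = (if i = j then 1 else 0)"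
    and eig: "\<forall>i<card CL. \<forall>a\<in>CL. (\<Sum>b\<in>CL. Ag a b * ww i b) = nu ! i * ww i a"
    using spectral_fun[of CL Ag, OF finite_CL symA] unfolding nu_def by blast
  have len: "length nu = m" and so: "sorted nu"
    using spectral_fun[of CL Ag, OF finite_CL symA] unfolding nu_def m_def by auto
  define T where "T = {p} \<times> CL"
  define J where "J = {m - j..<m}"
  define u where "u = (\<lambda>i. emb p (ww i))"
  define d :: "'v \<times> (nat \<times> nat) \<Rightarrow> 'v \<times> (nat \<times> nat) \<Rightarrow> real" where "d = (\<lambda>l s. if s = l then 1 else 0)"
  have JCL: "J \<subseteq> {..<card CL}" unfolding J_def m_def by auto
  have fin: "finite S" by (rule finS)
  have sym: "\<And>a b. a \<in> S \<Longrightarrow> b \<in> S \<Longrightarrow> LG a b = LG b a" using LG_sym by blast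
  have jS: "j \<le> card S" using j basic_T[OF p] by simp
  have TS: "T \<subseteq> S" unfolding T_def using basic_T[OF p] by simp
  have fJ: "finite J" unfolding J_def by simp
  have fT: "finite T" unfolding T_def using finite_CL by simp
  have uind: "\<And>\<beta>. (\<forall>s\<in>T. (\<Sum>i\<in>J. \<beta> i * u i s) = 0) \<Longrightarrow> (\<forall>i\<in>J. \<beta> i = 0)"
    unfolding u_def T_def by (rule uind_emb[OF orth JCL])
  have dind: "\<And>\<gamma>. (\<forall>s\<in>T. (\<Sum>l\<in>T. \<gamma> l * d l s) = 0) \<Longrightarrow> (\<forall>l\<in>T. \<gamma> l = 0)"
    unfolding d_def by (rule dind_ind[OF order.refl fT])
  have card: "card T + j \<le> card J + card T" unfolding J_def using j m_def by simp
  have bound: "qf S LG (\<lambda>s. \<Sum>i\<in>J. \<beta> i * u i s) \<le> (4 - nu ! (m - j)) *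
     fdot S (\<lambda>s. \<Sum>i\<in>J. \<beta> i * u i s) (\<lambda>s. \<Sum>i\<in>J. \<beta> i * u i s)" for \<beta> :: "nat \<Rightarrow> real"
  proof -
    note cf = copy_forms[where \<beta>=\<beta>, OF p orth eig JCL]
    let ?x = "\<lambda>s. \<Sum>i\<in>J. \<beta> i * u i s"
    have zx: "(\<lambda>c. ?x (p, c)) = (\<lambda>c. \<Sum>i\<in>J. \<beta> i * ww i c)" unfolding u_def using cf(4) by simp
    have "qf S LG ?x = 4 * fdot CL (\<lambda>c. ?x (p, c)) (\<lambda>c. ?x (p, c)) - qf CL Ag (\<lambda>c. ?x (p, c))"
      by (rule qf_copy_A[OF p]) (use cf(3) in \<open>simp add: u_def\<close>)
    also have "fdot CL (\<lambda>c. ?x (p, c)) (\<lambda>c. ?x (p, c)) = fdot S ?x ?x"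
      by (rule fdot_copy[symmetric, OF p]) (use cf(3) in \<open>simp add: u_def\<close>)
    also have "fdot S ?x ?x = (\<Sum>i\<in>J. (\<beta> i)\<^sup>2)" unfolding u_def by (rule cf(1))
    also have "qf CL Ag (\<lambda>c. ?x (p, c)) = (\<Sum>i\<in>J. (\<beta> i)\<^sup>2 * nu ! i)" unfolding zx by (rule cf(2))
    finally have q: "qf S LG ?x = 4 * (\<Sum>i\<in>J. (\<beta> i)\<^sup>2) - (\<Sum>i\<in>J. (\<beta> i)\<^sup>2 * nu ! i)" .
    have "nu ! (m - j) * (\<Sum>i\<in>J. (\<beta> i)\<^sup>2) \<le> (\<Sum>i\<in>J. (\<beta> i)\<^sup>2 * nu ! i)"
      by (rule sorted_wsum_ge[OF so]) (auto simp: J_def len)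
    then have "qf S LG ?x \<le> (4 - nu ! (m - j)) * (\<Sum>i\<in>J. (\<beta> i)\<^sup>2)"
      unfolding q by (simp add: algebra_simps)
    moreover have fx: "fdot S ?x ?x = (\<Sum>i\<in>J. (\<beta> i)\<^sup>2)" unfolding u_def by (rule cf(1))
    ultimately show ?thesis by simp
  qed
  have "eigenvalues S LG ! (j - 1) \<le> 4 - nu ! (m - j)"
    by (rule key_up[where M=LG and u=u and d=d and L=T and J=J and T=T, OF fin sym j(1) jS TS fJ fT uind dind card bound])
  then show ?thesis unfolding nu_def m_def .
qed


lemma claim1b:
  assumes p: "p \<in> V" and j: "1 \<le> j" "j \<le> card CL"
  shows "4 - eigenvalues CL Ag ! (j - 1) \<le> eigenvalues S LG ! (card S - j)"
proof -
  define m where "m = card CL"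
  define nu where "nu = eigenvalues CL Ag"
  have symA: "\<And>a b. a \<in> CL \<Longrightarrow> b \<in> CL \<Longrightarrow> Ag a b = Ag b a" using Ag_sym by blast
  obtain ww where orth: "\<forall>i<card CL. \<forall>j<card CL. fdot CL (ww i) (ww j) = (if i = j then 1 else 0)"
    and eig: "\<forall>i<card CL. \<forall>a\<in>CL. (\<Sum>b\<in>CL. Ag a b * ww i b) = nu ! i * ww i a"
    using spectral_fun[of CL Ag, OF finite_CL symA] unfolding nu_def by blast
  have len: "length nu = m" and so: "sorted nu"
    using spectral_fun[of CL Ag, OF finite_CL symA] unfolding nu_def m_def by auto
  define T where "T = {p} \<times> CL"
  define J where "J = {..<j}"
  define u where "u = (\<lambda>i. emb p (ww i))"
  define d :: "'v \<times> (nat \<times> nat) \<Rightarrow> 'v \<times> (nat \<times> nat) \<Rightarrow> real" where "d = (\<lambda>l s. if s = l then 1 else 0)"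
  have JCL: "J \<subseteq> {..<card CL}" unfolding J_def using j by auto
  have fin: "finite S" by (rule finS)
  have sym: "\<And>a b. a \<in> S \<Longrightarrow> b \<in> S \<Longrightarrow> LG a b = LG b a" using LG_sym by blast
  have jS: "j \<le> card S" using j basic_T[OF p] by simp
  have TS: "T \<subseteq> S" unfolding T_def using basic_T[OF p] by simp
  have fJ: "finite J" unfolding J_def by simp
  have fT: "finite T" unfolding T_def using finite_CL by simp
  have uind: "\<And>\<beta>. (\<forall>s\<in>T. (\<Sum>i\<in>J. \<beta> i * u i s) = 0) \<Longrightarrow> (\<forall>i\<in>J. \<beta> i = 0)"
    unfolding u_def T_def by (rule uind_emb[OF orth JCL])
  have dind: "\<And>\<gamma>. (\<forall>s\<in>T. (\<Sum>l\<in>T. \<gamma> l * d l s) = 0) \<Longrightarrow> (\<forall>l\<in>T. \<gamma> l = 0)"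
    unfolding d_def by (rule dind_ind[OF order.refl fT])
  have card: "card T + j \<le> card J + card T" unfolding J_def using j m_def by simp
  have bound: "(4 - nu ! (j - 1)) * fdot S (\<lambda>s. \<Sum>i\<in>J. \<beta> i * u i s) (\<lambda>s. \<Sum>i\<in>J. \<beta> i * u i s)
     \<le> qf S LG (\<lambda>s. \<Sum>i\<in>J. \<beta> i * u i s)" for \<beta> :: "nat \<Rightarrow> real"
  proof -
    note cf = copy_forms[where \<beta>=\<beta>, OF p orth eig JCL]
    let ?x = "\<lambda>s. \<Sum>i\<in>J. \<beta> i * u i s"
    have zx: "(\<lambda>c. ?x (p, c)) = (\<lambda>c. \<Sum>i\<in>J. \<beta> i * ww i c)" unfolding u_def using cf(4) by simp
    have "qf S LG ?x = 4 * fdot CL (\<lambda>c. ?x (p, c)) (\<lambda>c. ?x (p, c)) - qf CL Ag (\<lambda>c. ?x (p, c))"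
      by (rule qf_copy_A[OF p]) (use cf(3) in \<open>simp add: u_def\<close>)
    also have "fdot CL (\<lambda>c. ?x (p, c)) (\<lambda>c. ?x (p, c)) = fdot S ?x ?x"
      by (rule fdot_copy[symmetric, OF p]) (use cf(3) in \<open>simp add: u_def\<close>)
    also have "fdot S ?x ?x = (\<Sum>i\<in>J. (\<beta> i)\<^sup>2)" unfolding u_def by (rule cf(1))
    also have "qf CL Ag (\<lambda>c. ?x (p, c)) = (\<Sum>i\<in>J. (\<beta> i)\<^sup>2 * nu ! i)" unfolding zx by (rule cf(2))
    finally have q: "qf S LG ?x = 4 * (\<Sum>i\<in>J. (\<beta> i)\<^sup>2) - (\<Sum>i\<in>J. (\<beta> i)\<^sup>2 * nu ! i)" .
    have "(\<Sum>i\<in>J. (\<beta> i)\<^sup>2 * nu ! i) \<le> nu ! (j - 1) * (\<Sum>i\<in>J. (\<beta> i)\<^sup>2)"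
      by (rule sorted_wsum_le[OF so]) (use j in \<open>auto simp: J_def len m_def\<close>)
    then have "(4 - nu ! (j - 1)) * (\<Sum>i\<in>J. (\<beta> i)\<^sup>2) \<le> qf S LG ?x"
      unfolding q by (simp add: algebra_simps)
    moreover have fx: "fdot S ?x ?x = (\<Sum>i\<in>J. (\<beta> i)\<^sup>2)" unfolding u_def by (rule cf(1))
    ultimately show ?thesis by simp
  qed
  have "4 - nu ! (j - 1) \<le> eigenvalues S LG ! (card S - j)"
    by (rule key_low[where M=LG and u=u and d=d and L=T and J=J and T=T, OF fin sym j(1) jS TS fJ fT uind dind card bound])
  then show ?thesis unfolding nu_def .
qed

lemma fdot_sq: "fdot C z z = (\<Sum>c\<in>C. (z c)\<^sup>2)"
  unfolding fdot_def by (simp add: power2_eq_square)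

lemma claim2:
  assumes p: "p \<in> V" and k2: "k \<ge> 2" and it: "1 \<le> i" "i \<le> t" "t \<le> card CL"
  shows "eigenvalues S LG ! (i - 1) \<le> eigenvalues CL Lg ! (t - 1) + delta k (card CL - t + i)"
proof -
  define m where "m = card CL"
  define lam where "lam = eigenvalues CL Lg"
  define r where "r = m - t + i"
  have symL: "\<And>a b. a \<in> CL \<Longrightarrow> b \<in> CL \<Longrightarrow> Lg a b = Lg b a" using Lg_sym by blast
  obtain ww where orth: "\<forall>i<card CL. \<forall>j<card CL. fdot CL (ww i) (ww j) = (if i = j then 1 else 0)"
    and eig: "\<forall>i<card CL. \<forall>a\<in>CL. (\<Sum>b\<in>CL. Lg a b * ww i b) = lam ! i * ww i a"
    using spectral_fun[of CL Lg, OF finite_CL symL] unfolding lam_def by blast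
  have len: "length lam = m" and so: "sorted lam"
    using spectral_fun[of CL Lg, OF finite_CL symL] unfolding lam_def m_def by auto
  have rm: "r \<le> k * k" using it card_CL[of k] unfolding r_def m_def by simp
  obtain C where C: "C \<subseteq> CL" "card C = r" and Cd: "\<forall>c\<in>C. real (nsides k c) \<le> delta k r"
    using cells_le[OF k2 rm] by blast
  define T where "T = {p} \<times> CL"
  define L where "L = {p} \<times> C"
  define J where "J = {..<t}"
  define u where "u = (\<lambda>i. emb p (ww i))"
  define d :: "'v \<times> (nat \<times> nat) \<Rightarrow> 'v \<times> (nat \<times> nat) \<Rightarrow> real" where "d = (\<lambda>l s. if s = l then 1 else 0)"
  have JCL: "J \<subseteq> {..<card CL}" unfolding J_def using it by auto
  have fin: "finite S" by (rule finS)
  have sym: "\<And>a b. a \<in> S \<Longrightarrow> b \<in> S \<Longrightarrow> LG a b = LG b a" using LG_sym by blast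
  have jS: "i \<le> card S" using it basic_T[OF p] by simp
  have TS: "T \<subseteq> S" unfolding T_def using basic_T[OF p] by simp
  have fJ: "finite J" unfolding J_def by simp
  have LT: "L \<subseteq> T" unfolding L_def T_def using C by auto
  have fL: "finite L" unfolding L_def using C finite_CL finite_subset by blast
  have cL: "card L = r" unfolding L_def using C by (simp add: card_cartesian_product)
  have uind: "\<And>\<beta>. (\<forall>s\<in>T. (\<Sum>i\<in>J. \<beta> i * u i s) = 0) \<Longrightarrow> (\<forall>i\<in>J. \<beta> i = 0)"
    unfolding u_def T_def by (rule uind_emb[OF orth JCL])
  have dind: "\<And>\<gamma>. (\<forall>s\<in>T. (\<Sum>l\<in>L. \<gamma> l * d l s) = 0) \<Longrightarrow> (\<forall>l\<in>L. \<gamma> l = 0)"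
    unfolding d_def by (rule dind_ind[OF LT fL])
  have card: "card T + i \<le> card J + card L" unfolding J_def cL r_def m_def T_def
    using it basic_T[OF p] by simp
  have bound: "qf S LG (\<lambda>s. \<Sum>i\<in>J. \<beta> i * u i s) \<le> (lam ! (t - 1) + delta k r) *
     fdot S (\<lambda>s. \<Sum>i\<in>J. \<beta> i * u i s) (\<lambda>s. \<Sum>i\<in>J. \<beta> i * u i s)"
    if eqT: "\<forall>s\<in>T. (\<Sum>i\<in>J. \<beta> i * u i s) = (\<Sum>l\<in>L. \<gamma> l * d l s)" for \<beta> :: "nat \<Rightarrow> real" and \<gamma>
  proof -
    note cf = copy_forms[where \<beta>=\<beta>, OF p orth eig JCL]
    let ?x = "\<lambda>s. \<Sum>i\<in>J. \<beta> i * u i s"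
    let ?z = "\<lambda>c. ?x (p, c)"
    have zx: "?z = (\<lambda>c. \<Sum>i\<in>J. \<beta> i * ww i c)" unfolding u_def using cf(4) by simp
    have zC: "?z c = 0" if c: "c \<in> CL" "c \<notin> C" for c
    proof -
      have "(p, c) \<in> T" "(p, c) \<notin> L" unfolding T_def L_def using c by auto
      then have "(\<Sum>l\<in>L. \<gamma> l * d l (p, c)) = 0" unfolding d_def by (auto intro!: sum.neutral)
      then show ?thesis using eqT \<open>(p, c) \<in> T\<close> by simp
    qed
    have x0: "\<And>q c. q \<in> V \<Longrightarrow> c \<in> CL \<Longrightarrow> q \<noteq> p \<Longrightarrow> ?x (q, c) = 0" using cf(3) by (simp add: u_def)
    have fx: "fdot S ?x ?x = (\<Sum>i\<in>J. (\<beta> i)\<^sup>2)" unfolding u_def by (rule cf(1))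
    have fz: "fdot S ?x ?x = (\<Sum>c\<in>CL. (?z c)\<^sup>2)"
      using fdot_copy[OF p, of ?x] x0 by (simp add: fdot_sq)
    have "qf S LG ?x = qf CL Lg ?z + (\<Sum>c\<in>CL. real (nsides k c) * (?z c)\<^sup>2)"
      by (rule qf_copy_L[OF p]) (rule x0)
    also have "qf CL Lg ?z = (\<Sum>i\<in>J. (\<beta> i)\<^sup>2 * lam ! i)" unfolding zx by (rule cf(2))
    also have "\<dots> \<le> lam ! (t - 1) * (\<Sum>i\<in>J. (\<beta> i)\<^sup>2)"
      by (rule sorted_wsum_le[OF so]) (use it in \<open>auto simp: J_def len m_def\<close>)
    also have "(\<Sum>c\<in>CL. real (nsides k c) * (?z c)\<^sup>2) \<le> (\<Sum>c\<in>CL. delta k r * (?z c)\<^sup>2)"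
    proof (rule sum_mono)
      fix c assume c: "c \<in> CL"
      show "real (nsides k c) * (?z c)\<^sup>2 \<le> delta k r * (?z c)\<^sup>2"
      proof (cases "c \<in> C")
        case True then show ?thesis using Cd by (simp add: mult_right_mono)
      next
        case False then show ?thesis using zC[OF c] by simp
      qed
    qed
    finally have "qf S LG ?x \<le> lam ! (t - 1) * (\<Sum>i\<in>J. (\<beta> i)\<^sup>2) + delta k r * (\<Sum>c\<in>CL. (?z c)\<^sup>2)"
      by (simp add: sum_distrib_left)
    then show ?thesis using fx fz by (simp add: algebra_simps)
  qed
  have "eigenvalues S LG ! (i - 1) \<le> lam ! (t - 1) + delta k r"
    by (rule key_up[where M=LG and u=u and d=d and L=L and J=J and T=T, OF fin sym it(1) jS TS fJ fL uind dind card bound])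
  then show ?thesis unfolding lam_def r_def m_def .
qed

lemma claim3:
  assumes p: "p \<in> V" and js: "1 \<le> j" "j \<le> s" "s \<le> card CL"
  shows "eigenvalues CL Lg ! (card CL - s) + delta k (1 + s - j) \<le> eigenvalues S LG ! (card S - j)"
proof -
  define m where "m = card CL"
  define lam where "lam = eigenvalues CL Lg"
  define r where "r = 1 + s - j"
  have symL: "\<And>a b. a \<in> CL \<Longrightarrow> b \<in> CL \<Longrightarrow> Lg a b = Lg b a" using Lg_sym by blast
  obtain ww where orth: "\<forall>i<card CL. \<forall>j<card CL. fdot CL (ww i) (ww j) = (if i = j then 1 else 0)"
    and eig: "\<forall>i<card CL. \<forall>a\<in>CL. (\<Sum>b\<in>CL. Lg a b * ww i b) = lam ! i * ww i a"
    using spectral_fun[of CL Lg, OF finite_CL symL] unfolding lam_def by blast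
  have len: "length lam = m" and so: "sorted lam"
    using spectral_fun[of CL Lg, OF finite_CL symL] unfolding lam_def m_def by auto
  have r1: "1 \<le> r" and rm: "r \<le> k * k" using js card_CL[of k] unfolding r_def m_def by simp_all
  obtain C where C: "C \<subseteq> CL" "card C = k * k - r + 1" and Cd: "\<forall>c\<in>C. delta k r \<le> real (nsides k c)"
    using cells_ge[OF k1 r1 rm] by blast
  define T where "T = {p} \<times> CL"
  define L where "L = {p} \<times> C"
  define J where "J = {m - s..<m}"
  define u where "u = (\<lambda>i. emb p (ww i))"
  define d :: "'v \<times> (nat \<times> nat) \<Rightarrow> 'v \<times> (nat \<times> nat) \<Rightarrow> real" where "d = (\<lambda>l s. if s = l then 1 else 0)"
  have JCL: "J \<subseteq> {..<card CL}" unfolding J_def m_def by auto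
  have fin: "finite S" by (rule finS)
  have sym: "\<And>a b. a \<in> S \<Longrightarrow> b \<in> S \<Longrightarrow> LG a b = LG b a" using LG_sym by blast
  have jS: "j \<le> card S" using js basic_T[OF p] by simp
  have TS: "T \<subseteq> S" unfolding T_def using basic_T[OF p] by simp
  have fJ: "finite J" unfolding J_def by simp
  have LT: "L \<subseteq> T" unfolding L_def T_def using C by auto
  have fL: "finite L" unfolding L_def using C finite_CL finite_subset by blast
  have cL: "card L = k * k - r + 1" unfolding L_def using C by (simp add: card_cartesian_product)
  have uind: "\<And>\<beta>. (\<forall>s\<in>T. (\<Sum>i\<in>J. \<beta> i * u i s) = 0) \<Longrightarrow> (\<forall>i\<in>J. \<beta> i = 0)"
    unfolding u_def T_def by (rule uind_emb[OF orth JCL])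
  have dind: "\<And>\<gamma>. (\<forall>s\<in>T. (\<Sum>l\<in>L. \<gamma> l * d l s) = 0) \<Longrightarrow> (\<forall>l\<in>L. \<gamma> l = 0)"
    unfolding d_def by (rule dind_ind[OF LT fL])
  have card: "card T + j \<le> card J + card L" unfolding J_def cL r_def m_def T_def
    using js basic_T[OF p] card_CL[of k] by simp
  have bound: "(lam ! (m - s) + delta k r) * fdot S (\<lambda>s. \<Sum>i\<in>J. \<beta> i * u i s) (\<lambda>s. \<Sum>i\<in>J. \<beta> i * u i s)
      \<le> qf S LG (\<lambda>s. \<Sum>i\<in>J. \<beta> i * u i s)"
    if eqT: "\<forall>s\<in>T. (\<Sum>i\<in>J. \<beta> i * u i s) = (\<Sum>l\<in>L. \<gamma> l * d l s)" for \<beta> :: "nat \<Rightarrow> real" and \<gamma>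
  proof -
    note cf = copy_forms[where \<beta>=\<beta>, OF p orth eig JCL]
    let ?x = "\<lambda>s. \<Sum>i\<in>J. \<beta> i * u i s"
    let ?z = "\<lambda>c. ?x (p, c)"
    have zx: "?z = (\<lambda>c. \<Sum>i\<in>J. \<beta> i * ww i c)" unfolding u_def using cf(4) by simp
    have zC: "?z c = 0" if c: "c \<in> CL" "c \<notin> C" for c
    proof -
      have "(p, c) \<in> T" "(p, c) \<notin> L" unfolding T_def L_def using c by auto
      then have "(\<Sum>l\<in>L. \<gamma> l * d l (p, c)) = 0" unfolding d_def by (auto intro!: sum.neutral)
      then show ?thesis using eqT \<open>(p, c) \<in> T\<close> by simp
    qed
    have x0: "\<And>q c. q \<in> V \<Longrightarrow> c \<in> CL \<Longrightarrow> q \<noteq> p \<Longrightarrow> ?x (q, c) = 0" using cf(3) by (simp add: u_def)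
    have fx: "fdot S ?x ?x = (\<Sum>i\<in>J. (\<beta> i)\<^sup>2)" unfolding u_def by (rule cf(1))
    have fz: "fdot S ?x ?x = (\<Sum>c\<in>CL. (?z c)\<^sup>2)"
      using fdot_copy[OF p, of ?x] x0 by (simp add: fdot_sq)
    have "lam ! (m - s) * (\<Sum>i\<in>J. (\<beta> i)\<^sup>2) \<le> (\<Sum>i\<in>J. (\<beta> i)\<^sup>2 * lam ! i)"
      by (rule sorted_wsum_ge[OF so]) (auto simp: J_def len)
    also have "(\<Sum>i\<in>J. (\<beta> i)\<^sup>2 * lam ! i) = qf CL Lg ?z" unfolding zx by (rule cf(2)[symmetric])
    finally have A: "lam ! (m - s) * (\<Sum>i\<in>J. (\<beta> i)\<^sup>2) \<le> qf CL Lg ?z" .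
    have "(\<Sum>c\<in>CL. delta k r * (?z c)\<^sup>2) \<le> (\<Sum>c\<in>CL. real (nsides k c) * (?z c)\<^sup>2)"
    proof (rule sum_mono)
      fix c assume c: "c \<in> CL"
      show "delta k r * (?z c)\<^sup>2 \<le> real (nsides k c) * (?z c)\<^sup>2"
      proof (cases "c \<in> C")
        case True then show ?thesis using Cd by (simp add: mult_right_mono)
      next
        case False then show ?thesis using zC[OF c] by simp
      qed
    qed
    then have B: "delta k r * (\<Sum>c\<in>CL. (?z c)\<^sup>2) \<le> (\<Sum>c\<in>CL. real (nsides k c) * (?z c)\<^sup>2)"
      by (simp add: sum_distrib_left)
    have "qf S LG ?x = qf CL Lg ?z + (\<Sum>c\<in>CL. real (nsides k c) * (?z c)\<^sup>2)"
      by (rule qf_copy_L[OF p]) (rule x0)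
    then show ?thesis using A B fx fz by (simp add: algebra_simps)
  qed
  have "lam ! (m - s) + delta k r \<le> eigenvalues S LG ! (card S - j)"
    by (rule key_low[where M=LG and u=u and d=d and L=L and J=J and T=T, OF fin sym js(1) jS TS fJ fL uind dind card bound])
  then show ?thesis unfolding lam_def r_def m_def .
qed


lemma lap_rowsum:
  assumes "finite A" "a \<in> A"
  shows "(\<Sum>b\<in>A. lap_matrix A adj a b) = 0"
proof -
  have "(\<Sum>b\<in>A. lap_matrix A adj a b) = (\<Sum>b\<in>A. if a = b then real (card {w \<in> A. adj a w}) else 0)
      - (\<Sum>b\<in>A. if adj a b then 1 else 0)"
    unfolding lap_matrix_def by (simp add: sum_subtractf)
  also have "(\<Sum>b\<in>A. if a = b then real (card {w \<in> A. adj a w}) else 0) = real (card {w \<in> A. adj a w})"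
    using assms by simp
  also have "(\<Sum>b\<in>A. if adj a b then 1 else 0) = (\<Sum>b\<in>{w \<in> A. adj a w}. (1::real))"
    using sum.inter_filter[OF assms(1), of "\<lambda>_. (1::real)" "adj a"] by simp
  finally show ?thesis by simp
qed

lemma claim2_k1:
  assumes p: "p \<in> V" and k: "k = 1"
  shows "eigenvalues S LG ! 0 \<le> eigenvalues CL Lg ! 0 + delta k 1"
proof -
  have d0: "delta k 1 = 0" using k by (simp add: delta_def)
  have CL1: "CL = {(0, 0)}" using k by (auto simp: cluster_vertices_def)
  have fin: "finite S" by (rule finS)
  have sym: "\<And>a b. a \<in> S \<Longrightarrow> b \<in> S \<Longrightarrow> LG a b = LG b a" using LG_sym by blast
  have pS: "(p, (0, 0)) \<in> S" using p CL1 by (auto simp: gc_vertices_def)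
  have Sne: "1 \<le> card S" using fin pS by (metis One_nat_def Suc_leI card_gt_0_iff empty_iff)
  define u :: "unit \<Rightarrow> 'v \<times> (nat \<times> nat) \<Rightarrow> real" where "u = (\<lambda>_ _. 1)"
  define d :: "'v \<times> (nat \<times> nat) \<Rightarrow> 'v \<times> (nat \<times> nat) \<Rightarrow> real" where "d = (\<lambda>l s. if s = l then 1 else 0)"
  have uind: "\<And>\<beta>. (\<forall>s\<in>S. (\<Sum>i\<in>{()}. \<beta> i * u i s) = 0) \<Longrightarrow> (\<forall>i\<in>{()}. \<beta> i = 0)"
    using pS unfolding u_def by auto
  have dind: "\<And>\<gamma>. (\<forall>s\<in>S. (\<Sum>l\<in>S. \<gamma> l * d l s) = 0) \<Longrightarrow> (\<forall>l\<in>S. \<gamma> l = 0)"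
    unfolding d_def by (rule dind_ind[OF order.refl fin])
  have card: "card S + 1 \<le> card {()} + card S" by simp
  have bound: "qf S LG (\<lambda>s. \<Sum>i\<in>{()}. \<beta> i * u i s) \<le> 0 * fdot S (\<lambda>s. \<Sum>i\<in>{()}. \<beta> i * u i s) (\<lambda>s. \<Sum>i\<in>{()}. \<beta> i * u i s)"
    for \<beta> :: "unit \<Rightarrow> real"
  proof -
    have "qf S LG (\<lambda>s. \<Sum>i\<in>{()}. \<beta> i * u i s) = (\<Sum>a\<in>S. \<beta> () * \<beta> () * (\<Sum>b\<in>S. LG a b))"
      unfolding qf_def u_def by (simp add: sum_distrib_left algebra_simps)
    also have "\<dots> = 0" using lap_rowsum[OF fin] by simp
    finally show ?thesis by simp
  qed
  have A: "eigenvalues S LG ! (1 - 1) \<le> 0"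
    by (rule key_up[where M=LG and u=u and d=d and L=S and J="{()}" and T=S, OF fin sym order.refl Sne order.refl _ fin uind dind card bound]) simp_all
  have finC: "finite CL" by (rule finite_CL)
  have symL: "\<And>a b. a \<in> CL \<Longrightarrow> b \<in> CL \<Longrightarrow> Lg a b = Lg b a" using Lg_sym by blast
  have cC: "card CL = 1" using CL1 by simp
  define d' :: "nat \<times> nat \<Rightarrow> nat \<times> nat \<Rightarrow> real" where "d' = (\<lambda>l s. if s = l then 1 else 0)"
  have dind': "\<And>\<gamma>. (\<forall>s\<in>CL. (\<Sum>l\<in>CL. \<gamma> l * d' l s) = 0) \<Longrightarrow> (\<forall>l\<in>CL. \<gamma> l = 0)"
    unfolding d'_def by (rule dind_ind[OF order.refl finC])
  have card': "card CL + 1 \<le> card CL + card CL" using cC by simp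
  have Lg0: "Lg (0, 0) (0, 0) = 0"
  proof -
    have "nsides k (0, 0) = 4" using k by (simp add: nsides_sum)
    moreover have "\<not> grid_adj (0, 0) (0, 0)" by (simp add: grid_adj_def)
    ultimately show ?thesis using Lg_entry[of "(0, 0)" "(0, 0)"] CL1 by simp
  qed
  have bound': "0 * fdot CL (\<lambda>s. \<Sum>i\<in>CL. \<beta> i * d' i s) (\<lambda>s. \<Sum>i\<in>CL. \<beta> i * d' i s) \<le> qf CL Lg (\<lambda>s. \<Sum>i\<in>CL. \<beta> i * d' i s)"
    for \<beta> :: "nat \<times> nat \<Rightarrow> real"
  proof -
    have "lap_matrix {(0, 0)} grid_adj (0, 0) (0, 0) = 0" using Lg0 CL1 by simp
    then show ?thesis unfolding qf_def CL1 by simp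
  qed
  have B: "0 \<le> eigenvalues CL Lg ! (card CL - 1)"
    by (rule key_low[where M=Lg and u=d' and d=d' and L=CL and J=CL and T=CL, OF finC symL order.refl _ order.refl finC finC dind' dind' card' bound']) (simp_all add: cC)
  show ?thesis using A B d0 cC by simp
qed

end

theorem theorem3p3:
  fixes V :: "'v set" and E :: "'v \<Rightarrow> 'v \<Rightarrow> bool" and rot :: "'v \<Rightarrow> nat \<Rightarrow> 'v" and k :: nat
  assumes "simple_graph V E" and "connected_graph V E" and "four_valent V E"
    and "orientation V E rot" and "k \<ge> 1"
  defines "N \<equiv> card (gc_vertices V k)"
    and "lamGC \<equiv> eigenvalues (gc_vertices V k) (lap_matrix (gc_vertices V k) (gc_adj E rot k))"
    and "nu \<equiv> eigenvalues (cluster_vertices k) (adj_matrix (cluster_vertices k) grid_adj)"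
    and "lam \<equiv> eigenvalues (cluster_vertices k) (lap_matrix (cluster_vertices k) grid_adj)"
  shows "(\<forall>j. 1 \<le> j \<and> j \<le> k^2 \<longrightarrow>
            lamGC ! (j - 1) \<le> 4 - nu ! (k^2 - j) \<and>
            lamGC ! (N - j) \<ge> 4 - nu ! (j - 1))
       \<and> (\<forall>i t. 1 \<le> i \<and> i \<le> t \<and> t \<le> k^2 \<longrightarrow>
            lamGC ! (i - 1) \<le> lam ! (t - 1) + delta k (k^2 - t + i))
       \<and> (\<forall>j s. 1 \<le> j \<and> j \<le> s \<and> s \<le> k^2 \<longrightarrow>
            lamGC ! (N - j) \<ge> lam ! (k^2 - s) + delta k (1 + s - j))"
proof -
  interpret gcx V E rot k
    by unfold_locales (use assms(1,4,5) in auto)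
  obtain p where p: "p \<in> V" using assms(2) unfolding connected_graph_def by blast
  have m: "card (cluster_vertices k) = k^2" by (simp add: card_CL power2_eq_square)
  have c1: "lamGC ! (j - 1) \<le> 4 - nu ! (k^2 - j) \<and> lamGC ! (N - j) \<ge> 4 - nu ! (j - 1)"
    if "1 \<le> j" "j \<le> k^2" for j
    using claim1a[OF p, of j] claim1b[OF p, of j] that m unfolding assms(6-9) by simp
  have c2: "lamGC ! (i - 1) \<le> lam ! (t - 1) + delta k (k^2 - t + i)"
    if it: "1 \<le> i" "i \<le> t" "t \<le> k^2" for i t
  proof (cases "k \<ge> 2")
    case True
    then show ?thesis using claim2[OF p True, of i t] it m unfolding assms(6-9) by simp
  next
    case False
    then have k1': "k = 1" using assms(5) by simp
    then have "i = 1" "t = 1" using it by auto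
    then show ?thesis using claim2_k1[OF p k1'] k1' unfolding assms(6-9) by simp
  qed
  have c3: "lamGC ! (N - j) \<ge> lam ! (k^2 - s) + delta k (1 + s - j)"
    if "1 \<le> j" "j \<le> s" "s \<le> k^2" for j s
    using claim3[OF p, of j s] that m unfolding assms(6-9) by simp
  show ?thesis using c1 c2 c3 by blast
qed

end
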